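(* Let $n\ge1$, let $\tau\in S_n$ have schedule $(w_1,\dots,w_n)$, and let $k$ be the length of the last run of $\tau$. Then $$\sum_{\substack{Pr\in\mathcal{P}ref_n\\ \operatorname{diagword}(Pr)=\tau}} t^{\operatorname{area}(Pr)}q^{\operatorname{dinv}(Pr)} = t^{\operatorname{maj}(\tau)}\frac{[n]_q}{[k]_q}\prod_{i=1}^n[w_i]_q = \frac{[n]_q}{[k]_q}\sum_{\substack{PF\in\mathcal{PF}_n\\ \operatorname{diagword}(PF)=\tau}} t^{\operatorname{area}(PF)}q^{\operatorname{dinv}(PF)}.$$
   Context: Runs of a permutation are its maximal increasing contiguous segments. Schedule of $\tau\in S_n$: if the last run has length $k$, $w_i=i$ for $1\le i\le k$; for $k<i\le n$, $w_i$ is the number of elements of the run containing $\tau_{n+1-i}$ larger than $\tau_{n+1-i}$ plus the number of elements smaller than $\tau_{n+1-i}$ in the next run. A preference function on $n$ cars is a map $f:[n]\to[n]$; $\mathcal{P}ref_n$ is the set of them. It is drawn as a labeled lattice path in the $n\times n$ grid: for $j=1,\dots,n$ in turn, the cars in $f^{-1}(j)$ are written in column $j$ in increasing order bottom to top in the lowest unused rows. A car in the cell with lower-left corner $(x,y)$ lies in diagonal $y-x$. The deviation $l(Pr)$ is the maximum over cars of minus their diagonal (always $\ge0$). A parking function is a preference function with $l(Pr)=0$ (equivalently $|f^{-1}([j])|\ge j$ for all $j$); $\mathcal{PF}_n$ is the set of them. $\operatorname{area}(Pr)=\sum_c(d(c)+l(Pr))$, $d(c)$ the diagonal of car $c$.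 $\operatorname{dinv}(Pr)$ = (number of pairs of cars in the same diagonal with the left one smaller) + (number of pairs $b<a$ with $a$ in diagonal $m+1$, $b$ in diagonal $m$, and $b$ in a column strictly right of $a$) + (number of cars in negative diagonals). $\operatorname{diagword}(Pr)$ lists the cars of each nonempty diagonal in increasing order, diagonals from highest to lowest. $\operatorname{maj}(\tau)$ is the sum of descent positions; $[m]_q=1+q+\dots+q^{m-1}$. *)

theory Defs
  imports "HOL-Library.FuncSet"
begin

definition Pref :: "nat \<Rightarrow> (nat \<Rightarrow> nat) set" where
  "Pref n = {1..n} \<rightarrow>\<^sub>E {1..n}"

text \<open>Row (0-based y-coordinate of the lower-left corner) of car c: the cars of
  column f c are placed, increasing bottom to top, in the lowest unused rows.\<close>
definition row :: "nat \<Rightarrow> (nat \<Rightarrow> nat) \<Rightarrow> nat \<Rightarrow> nat" where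
  "row n f c = card {c'\<in>{1..n}. f c' < f c} + card {c'\<in>{1..n}. f c' = f c \<and> c' < c}"

text \<open>Diagonal y - x of the cell with lower-left corner (x,y) = (f c - 1, row).\<close>
definition diag :: "nat \<Rightarrow> (nat \<Rightarrow> nat) \<Rightarrow> nat \<Rightarrow> int" where
  "diag n f c = int (row n f c) - (int (f c) - 1)"

definition deviation :: "nat \<Rightarrow> (nat \<Rightarrow> nat) \<Rightarrow> int" where
  "deviation n f = Max ((\<lambda>c. - diag n f c) ` {1..n})"

definition PF :: "nat \<Rightarrow> (nat \<Rightarrow> nat) set" where
  "PF n = {f \<in> Pref n. deviation n f = 0}"

definition area :: "nat \<Rightarrow> (nat \<Rightarrow> nat) \<Rightarrow> nat" where
  "area n f = nat (\<Sum>c\<in>{1..n}. diag n f c + deviation n f)"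

definition dinv :: "nat \<Rightarrow> (nat \<Rightarrow> nat) \<Rightarrow> nat" where
  "dinv n f =
     card {(a, b). a \<in> {1..n} \<and> b \<in> {1..n} \<and> diag n f a = diag n f b \<and> f a < f b \<and> a < b}
   + card {(a, b). a \<in> {1..n} \<and> b \<in> {1..n} \<and> b < a \<and> diag n f a = diag n f b + 1 \<and> f a < f b}
   + card {c \<in> {1..n}. diag n f c < 0}"

definition diagword :: "nat \<Rightarrow> (nat \<Rightarrow> nat) \<Rightarrow> nat list" where
  "diagword n f = concat (map (\<lambda>d. sorted_list_of_set {c \<in> {1..n}. diag n f c = d})
                             (rev [- int n..int n]))"

section \<open>Permutation statistics (one-line notation as a list, 0-based indices)\<close>

definition run_index :: "nat list \<Rightarrow> nat \<Rightarrow> nat" where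
  "run_index \<tau> p = card {i. i + 1 \<le> p \<and> \<tau> ! i > \<tau> ! (i + 1)}"

definition last_run_len :: "nat list \<Rightarrow> nat" where
  "last_run_len \<tau> = card {p. p < length \<tau> \<and> run_index \<tau> p = run_index \<tau> (length \<tau> - 1)}"

text \<open>schedule \<tau> i = w_i for 1 <= i <= n; \<tau>_{n+1-i} is \<tau> ! (n - i).\<close>
definition schedule :: "nat list \<Rightarrow> nat \<Rightarrow> nat" where
  "schedule \<tau> i =
     (if i \<le> last_run_len \<tau> then i
      else (let n = length \<tau>; p = n - i in
              card {p'. p' < n \<and> run_index \<tau> p' = run_index \<tau> p \<and> \<tau> ! p' > \<tau> ! p}
            + card {p'. p' < n \<and> run_index \<tau> p' = run_index \<tau> p + 1 \<and> \<tau> ! p' < \<tau> ! p}))"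

definition maj :: "nat list \<Rightarrow> nat" where
  "maj \<tau> = (\<Sum>i\<in>{i. 1 \<le> i \<and> i < length \<tau> \<and> \<tau> ! (i - 1) > \<tau> ! i}. i)"

definition qint :: "nat \<Rightarrow> 'a::comm_ring_1 \<Rightarrow> 'a" where
  "qint m q = (\<Sum>i<m. q ^ i)"

end

theory Submission
  imports Defs
begin

definition okp :: "(nat \<Rightarrow> int) \<Rightarrow> nat \<Rightarrow> nat \<Rightarrow> bool" where
  "okp lv x y \<longleftrightarrow> lv y \<le> lv x + 1 \<and> (lv y = lv x + 1 \<longrightarrow> x < y)"

definition valid :: "(nat \<Rightarrow> int) \<Rightarrow> nat list \<Rightarrow> bool" where
  "valid lv L \<longleftrightarrow> successively (okp lv) L"

definition Pr :: "(nat \<Rightarrow> int) \<Rightarrow> nat \<Rightarrow> nat \<Rightarrow> bool" where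
  "Pr lv a b \<longleftrightarrow> (lv a = lv b \<and> a < b) \<or> (lv a = lv b + 1 \<and> b < a)"

fun pairs :: "(nat \<Rightarrow> int) \<Rightarrow> nat list \<Rightarrow> nat" where
  "pairs lv [] = 0"
| "pairs lv (x # xs) = length (filter (Pr lv x) xs) + pairs lv xs"

definition Sh :: "(nat \<Rightarrow> int) \<Rightarrow> nat set \<Rightarrow> nat list set" where
  "Sh lv X = {L. distinct L \<and> set L = X \<and> valid lv L}"

definition ins :: "nat \<Rightarrow> nat \<Rightarrow> nat list \<Rightarrow> nat list" where
  "ins i c L = take i L @ c # drop i L"

definition cnt :: "nat set \<Rightarrow> nat list \<Rightarrow> nat" where
  "cnt S xs = length (filter (\<lambda>x. x \<in> S) xs)"

definition Rtop :: "(nat \<Rightarrow> int) \<Rightarrow> nat set \<Rightarrow> nat \<Rightarrow> nat set" where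
  "Rtop lv X c = {x\<in>X. lv x = lv c \<or> (lv x + 1 = lv c \<and> x < c)}"

definition Rbot :: "(nat \<Rightarrow> int) \<Rightarrow> nat set \<Rightarrow> nat \<Rightarrow> nat set" where
  "Rbot lv X c = {x\<in>X. lv x = lv c \<or> (lv x = lv c + 1 \<and> c < x)}"

lemma qint_Suc: "qint (Suc m) q = qint m q + q ^ m"
  by (simp add: qint_def)

lemma qint_Suc2: "qint (Suc m) q = 1 + q * qint m q"
  by (simp add: qint_def sum.lessThan_Suc_shift sum_distrib_left del: sum.lessThan_Suc)

lemma pairs_ins_gen:
  "pairs lv (A @ c # B) = pairs lv (A @ B) + length (filter (Pr lv c) B) + length (filter (\<lambda>x. Pr lv x c) A)"
  by (induction A) auto

lemma finite_Sh: "finite X \<Longrightarrow> finite (Sh lv X)"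
proof -
  assume "finite X"
  have "Sh lv X \<subseteq> {L. set L \<subseteq> X \<and> length L = card X}"
    unfolding Sh_def using distinct_card by fastforce
  moreover have "finite {L. set L \<subseteq> X \<and> length L = card X}"
    using \<open>finite X\<close> by (rule finite_lists_length_eq)
  ultimately show ?thesis by (rule finite_subset)
qed

lemma cnt_card: "distinct xs \<Longrightarrow> S \<subseteq> set xs \<Longrightarrow> cnt S xs = card S"
proof -
  assume d: "distinct xs" and s: "S \<subseteq> set xs"
  have "cnt S xs = card (set (filter (\<lambda>x. x \<in> S) xs))"
    unfolding cnt_def by (metis d distinct_card distinct_filter)
  also have "set (filter (\<lambda>x. x \<in> S) xs) = S" using s by auto
  finally show ?thesis .
qed

lemma possum_top:
  "(\<Sum>i<length xs. if xs ! i \<in> S then q ^ cnt S (drop (Suc i) xs) else 0) = qint (cnt S xs) (q::'a::comm_ring_1)"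
proof (induction xs)
  case Nil
  then show ?case by (simp add: cnt_def qint_def)
next
  case (Cons x xs)
  let ?F = "\<lambda>ys i. if ys ! i \<in> S then q ^ cnt S (drop (Suc i) ys) else 0"
  have "(\<Sum>i<length (x#xs). ?F (x#xs) i) = ?F (x#xs) 0 + (\<Sum>i<length xs. ?F (x#xs) (Suc i))"
    by (simp only: length_Cons sum.lessThan_Suc_shift)
  also have "(\<Sum>i<length xs. ?F (x#xs) (Suc i)) = (\<Sum>i<length xs. ?F xs i)"
    by (simp cong: if_cong)
  also have "?F (x#xs) 0 = (if x \<in> S then q ^ cnt S xs else 0)" by simp
  finally show ?case
    using Cons by (simp add: cnt_def qint_Suc)
qed

lemma possum_bot:
  "(\<Sum>i<length xs. if xs ! i \<in> S then q ^ cnt S (take i xs) else 0) = qint (cnt S xs) (q::'a::comm_ring_1)"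
proof (induction xs)
  case Nil
  then show ?case by (simp add: cnt_def qint_def)
next
  case (Cons x xs)
  let ?F = "\<lambda>ys i. if ys ! i \<in> S then q ^ cnt S (take i ys) else 0"
  have "(\<Sum>i<length (x#xs). ?F (x#xs) i) = ?F (x#xs) 0 + (\<Sum>i<length xs. ?F (x#xs) (Suc i))"
    by (simp only: length_Cons sum.lessThan_Suc_shift)
  also have "(\<Sum>i<length xs. ?F (x#xs) (Suc i)) = (if x \<in> S then q else 1) * (\<Sum>i<length xs. ?F xs i)"
    by (auto simp: sum_distrib_left cnt_def intro!: sum.cong)
  also have "?F (x#xs) 0 = (if x \<in> S then 1 else 0)" by (simp add: cnt_def)
  finally show ?case
    using Cons by (simp add: cnt_def qint_Suc2)
qed

lemma possum_top':
  "(\<Sum>i\<in>{i. i \<le> length xs \<and> (i = 0 \<or> xs!(i-1) \<in> S) \<and> (i = 0 \<longrightarrow> z)}. q ^ cnt S (drop i xs))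
     = qint (cnt S xs + (if z then 1 else 0)) (q::'a::comm_ring_1)"
proof -
  let ?A = "{i \<in> {..<length xs}. xs ! i \<in> S}"
  have eq: "{i. i \<le> length xs \<and> (i = 0 \<or> xs!(i-1) \<in> S) \<and> (i = 0 \<longrightarrow> z)}
      = (if z then {0} else {}) \<union> Suc ` ?A"
    apply (rule set_eqI)
    subgoal for i by (cases i) auto
    done
  have dj: "(if z then {0} else {}) \<inter> Suc ` ?A = {}" by auto
  have "(\<Sum>i\<in>Suc ` ?A. q ^ cnt S (drop i xs)) = (\<Sum>i\<in>?A. q ^ cnt S (drop (Suc i) xs))"
    by (subst sum.reindex) auto
  also have "\<dots> = (\<Sum>i<length xs. if xs ! i \<in> S then q ^ cnt S (drop (Suc i) xs) else 0)"
    by (subst sum.inter_filter) auto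
  also have "\<dots> = qint (cnt S xs) q" by (rule possum_top)
  finally have 1: "(\<Sum>i\<in>Suc ` ?A. q ^ cnt S (drop i xs)) = qint (cnt S xs) q" .
  show ?thesis
    unfolding eq
    apply (subst sum.union_disjoint)
    using dj 1 by (auto simp: qint_Suc)
qed

lemma possum_bot':
  "(\<Sum>i\<in>{i. i \<le> length xs \<and> (i = length xs \<or> xs!i \<in> S) \<and> (i = length xs \<longrightarrow> z)}. q ^ cnt S (take i xs))
     = qint (cnt S xs + (if z then 1 else 0)) (q::'a::comm_ring_1)"
proof -
  let ?A = "{i \<in> {..<length xs}. xs ! i \<in> S}"
  have eq: "{i. i \<le> length xs \<and> (i = length xs \<or> xs!i \<in> S) \<and> (i = length xs \<longrightarrow> z)}
      = (if z then {length xs} else {}) \<union> ?A"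
    by auto
  have dj: "(if z then {length xs} else {}) \<inter> ?A = {}" by auto
  have "(\<Sum>i\<in>?A. q ^ cnt S (take i xs)) = (\<Sum>i<length xs. if xs ! i \<in> S then q ^ cnt S (take i xs) else 0)"
    by (subst sum.inter_filter) auto
  also have "\<dots> = qint (cnt S xs) q" by (rule possum_bot)
  finally have 1: "(\<Sum>i\<in>?A. q ^ cnt S (take i xs)) = qint (cnt S xs) q" .
  show ?thesis
    unfolding eq
    apply (subst sum.union_disjoint)
    using dj 1 by (auto simp: qint_Suc)
qed

lemma valid_app: "valid lv (A @ B) \<longleftrightarrow> valid lv A \<and> valid lv B \<and> (A = [] \<or> B = [] \<or> okp lv (last A) (hd B))"
  unfolding valid_def by (rule successively_append_iff)

lemma valid_ins3: "valid lv (A @ c # B) \<longleftrightarrow> valid lv A \<and> valid lv B \<and> (A = [] \<or> okp lv (last A) c) \<and> (B = [] \<or> okp lv c (hd B))"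
  unfolding valid_def successively_append_iff successively_Cons by auto

lemma ins_split: "i \<le> length L \<Longrightarrow> ins i c L = take i L @ c # drop i L" by (simp add: ins_def)

lemma remove1_ins: "c \<notin> set L \<Longrightarrow> remove1 c (ins i c L) = L"
proof -
  assume "c \<notin> set L"
  then have "c \<notin> set (take i L)" by (meson in_set_takeD)
  then show ?thesis by (simp add: ins_def remove1_append)
qed

lemma takeWhile_ins: "c \<notin> set L \<Longrightarrow> takeWhile (\<lambda>x. x \<noteq> c) (ins i c L) = take i L"
proof -
  assume "c \<notin> set L"
  then have "c \<notin> set (take i L)" by (meson in_set_takeD)
  then show ?thesis unfolding ins_def by (subst takeWhile_append2) auto
qed

lemma set_ins: "set (ins i c L) = insert c (set L)"
proof -
  have "set L = set (take i L) \<union> set (drop i L)" by (metis append_take_drop_id set_append)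
  then show ?thesis by (auto simp: ins_def)
qed

lemma distinct_ins: "distinct L \<Longrightarrow> c \<notin> set L \<Longrightarrow> distinct (ins i c L)"
proof -
  assume d: "distinct L" and c: "c \<notin> set L"
  have "distinct (take i L @ drop i L)" using d by simp
  then have "distinct (take i L) \<and> distinct (drop i L) \<and> set (take i L) \<inter> set (drop i L) = {}"
    by (simp only: distinct_append)
  moreover have "c \<notin> set (take i L)" "c \<notin> set (drop i L)" using c by (meson in_set_takeD in_set_dropD)+
  ultimately show ?thesis by (simp add: ins_def)
qed

lemma inj_ins: "c \<notin> set L \<Longrightarrow> inj_on (\<lambda>i. ins i c L) {i. i \<le> length L}"
proof (rule inj_onI)
  fix i j assume c: "c \<notin> set L" and i: "i \<in> {i. i \<le> length L}" and j: "j \<in> {i. i \<le> length L}"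
    and e: "ins i c L = ins j c L"
  have "take i L = take j L" using takeWhile_ins[OF c, of i] takeWhile_ins[OF c, of j] e by simp
  then have "length (take i L) = length (take j L)" by simp
  then show "i = j" using i j by simp
qed


lemma gen_fiber:
  fixes q :: "'a::comm_ring_1"
  assumes fin: "finite X" and cX: "c \<notin> X"
    and D: "\<And>A B. valid lv (A @ c # B) \<Longrightarrow> set A \<subseteq> X \<Longrightarrow> set B \<subseteq> X \<Longrightarrow> valid lv (A @ B) \<and> P (A @ B) (length A)"
    and I: "\<And>L' i. L' \<in> Sh lv X \<Longrightarrow> i \<le> length L' \<Longrightarrow> P L' i \<Longrightarrow> valid lv (ins i c L')"
    and H: "\<And>L' i. L' \<in> Sh lv X \<Longrightarrow> i \<le> length L' \<Longrightarrow> P L' i \<Longrightarrow> (Q (ins i c L') \<longleftrightarrow> Q' L' \<and> Pz L' i)"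
    and W: "\<And>L'. L' \<in> Sh lv X \<Longrightarrow> Q' L' \<Longrightarrow>
       (\<Sum>i\<in>{i. i \<le> length L' \<and> P L' i \<and> Pz L' i}. q ^ pairs lv (ins i c L')) = q ^ pairs lv L' * K"
  shows "(\<Sum>L\<in>{L\<in>Sh lv (insert c X). Q L}. q ^ pairs lv L) = (\<Sum>L'\<in>{L'\<in>Sh lv X. Q' L'}. q ^ pairs lv L') * K"
proof -
  let ?S = "{L\<in>Sh lv (insert c X). Q L}" and ?T = "{L'\<in>Sh lv X. Q' L'}"
  have dec: "remove1 c L \<in> Sh lv X \<and> length A \<le> length (remove1 c L) \<and> P (remove1 c L) (length A)
             \<and> L = ins (length A) c (remove1 c L)"
    if L: "L \<in> Sh lv (insert c X)" and AB: "L = A @ c # B" for L A B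
  proof -
    from L have dL: "distinct L" and sL: "set L = insert c X" and vL: "valid lv L" by (auto simp: Sh_def)
    from dL AB have cA: "c \<notin> set A" and cB: "c \<notin> set B" by auto
    have r: "remove1 c L = A @ B" using AB cA by (simp add: remove1_append)
    have sA: "set A \<subseteq> X" and sB: "set B \<subseteq> X" using sL AB cA cB by auto
    have "valid lv (A @ B) \<and> P (A @ B) (length A)" using D[OF _ sA sB] vL AB by simp
    moreover have "distinct (A @ B)" using dL AB by auto
    moreover have "set (A @ B) = X" using sL AB cA cB cX by auto
    ultimately show ?thesis using r AB by (simp add: Sh_def ins_def)
  qed
  have dec2: "\<exists>i. remove1 c L \<in> Sh lv X \<and> i \<le> length (remove1 c L) \<and> P (remove1 c L) i \<and> L = ins i c (remove1 c L)"
    if L: "L \<in> Sh lv (insert c X)" for L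
  proof -
    from L have "c \<in> set L" by (auto simp: Sh_def)
    then obtain A B where "L = A @ c # B" by (meson split_list)
    then show ?thesis using dec[OF L] by blast
  qed
  have img: "remove1 c ` ?S \<subseteq> ?T"
  proof
    fix L' assume "L' \<in> remove1 c ` ?S"
    then obtain L where L: "L \<in> Sh lv (insert c X)" "Q L" and L': "L' = remove1 c L" by auto
    have "\<exists>i. L' \<in> Sh lv X \<and> i \<le> length L' \<and> P L' i \<and> L = ins i c L'"
      using dec2[OF L(1)] unfolding L' .
    then obtain i where i: "L' \<in> Sh lv X" "i \<le> length L'" "P L' i" "L = ins i c L'" by blast
    have "Q' L'" using H[OF i(1) i(2) i(3)] L(2) i(4) by simp
    then show "L' \<in> ?T" using i(1) by simp
  qed
  have fib: "(\<Sum>L\<in>{L\<in>?S. remove1 c L = L'}. q ^ pairs lv L) = q ^ pairs lv L' * K" if L': "L' \<in> ?T" for L'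
  proof -
    have L'S: "L' \<in> Sh lv X" and QL': "Q' L'" using L' by auto
    have cL': "c \<notin> set L'" using L'S cX by (auto simp: Sh_def)
    let ?Pos = "{i. i \<le> length L' \<and> P L' i \<and> Pz L' i}"
    have eq: "{L\<in>?S. remove1 c L = L'} = (\<lambda>i. ins i c L') ` ?Pos"
    proof (rule set_eqI, rule iffI)
      fix L assume "L \<in> {L\<in>?S. remove1 c L = L'}"
      then have L: "L \<in> Sh lv (insert c X)" "Q L" "remove1 c L = L'" by auto
      have "\<exists>i. L' \<in> Sh lv X \<and> i \<le> length L' \<and> P L' i \<and> L = ins i c L'"
        using dec2[OF L(1)] unfolding L(3) .
      then obtain i where i: "i \<le> length L'" "P L' i" "L = ins i c L'" by blast
      then have "Pz L' i" using H[OF L'S i(1) i(2)] L(2) by simp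
      then show "L \<in> (\<lambda>i. ins i c L') ` ?Pos" using i by auto
    next
      fix L assume "L \<in> (\<lambda>i. ins i c L') ` ?Pos"
      then obtain i where i: "i \<le> length L'" "P L' i" "Pz L' i" and L: "L = ins i c L'" by auto
      have "distinct L" using L'S cL' L distinct_ins by (auto simp: Sh_def)
      moreover have "set L = insert c X" using L'S L set_ins by (auto simp: Sh_def)
      moreover have "valid lv L" using I[OF L'S i(1) i(2)] L by simp
      moreover have "Q L" using H[OF L'S i(1) i(2)] QL' i(3) L by simp
      moreover have "remove1 c L = L'" using remove1_ins[OF cL'] L by simp
      ultimately show "L \<in> {L\<in>?S. remove1 c L = L'}" by (auto simp: Sh_def)
    qed
    have "(\<Sum>L\<in>{L\<in>?S. remove1 c L = L'}. q ^ pairs lv L) = (\<Sum>i\<in>?Pos. q ^ pairs lv (ins i c L'))"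
      unfolding eq by (rule sum.reindex_cong[OF inj_on_subset[OF inj_ins[OF cL']]]) auto
    also have "\<dots> = q ^ pairs lv L' * K" using W[OF L'S QL'] .
    finally show ?thesis .
  qed
  have finS: "finite ?S" using finite_Sh[of "insert c X" lv] fin by simp
  have finT: "finite ?T" using finite_Sh[of X lv] fin by simp
  have "(\<Sum>L\<in>?S. q ^ pairs lv L) = (\<Sum>L'\<in>?T. \<Sum>L\<in>{L\<in>?S. remove1 c L = L'}. q ^ pairs lv L)"
    by (rule sum.group[symmetric, OF finS finT img])
  also have "\<dots> = (\<Sum>L'\<in>?T. q ^ pairs lv L' * K)" by (rule sum.cong[OF refl], rule fib) simp
  also have "\<dots> = (\<Sum>L'\<in>?T. q ^ pairs lv L') * K" by (simp add: sum_distrib_right)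
  finally show ?thesis .
qed


lemma last_take_nth: "0 < i \<Longrightarrow> i \<le> length L \<Longrightarrow> last (take i L) = L ! (i - 1)"
proof -
  assume a: "0 < i" "i \<le> length L"
  then have ne: "take i L \<noteq> []" by (cases L) auto
  have len: "length (take i L) = i" using a by simp
  have "last (take i L) = take i L ! (i - 1)" using ne len by (simp add: last_conv_nth)
  also have "\<dots> = L ! (i - 1)" using a by (simp add: nth_take)
  finally show ?thesis .
qed

lemma hd_drop_nth: "i < length L \<Longrightarrow> hd (drop i L) = L ! i"
  by (simp add: hd_drop_conv_nth)

lemma filter_cong_set: "(\<And>x. x \<in> set xs \<Longrightarrow> P x \<longleftrightarrow> P' x) \<Longrightarrow> filter P xs = filter P' xs"
  by (induction xs) auto

lemma top_fiber:
  fixes q :: "'a::comm_ring_1"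
  assumes fin: "finite X" and cX: "c \<notin> X"
    and top: "\<And>x. x \<in> X \<Longrightarrow> lv x \<le> lv c" and sm: "\<And>x. x \<in> X \<Longrightarrow> lv x = lv c \<Longrightarrow> c < x"
    and H: "\<And>L' i. L' \<in> Sh lv X \<Longrightarrow> i \<le> length L' \<Longrightarrow> (i = 0 \<or> L' ! (i - 1) \<in> Rtop lv X c)
              \<Longrightarrow> (Q (ins i c L') \<longleftrightarrow> Q' L' \<and> (i = 0 \<longrightarrow> z))"
  shows "(\<Sum>L\<in>{L\<in>Sh lv (insert c X). Q L}. q ^ pairs lv L)
       = (\<Sum>L'\<in>{L'\<in>Sh lv X. Q' L'}. q ^ pairs lv L') * qint (card (Rtop lv X c) + (if z then 1 else 0)) q"
proof -
  let ?R = "Rtop lv X c"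
  have okc: "okp lv c y" if "y \<in> X" for y using top[OF that] by (simp add: okp_def)
  have okp_iff: "okp lv p c \<longleftrightarrow> p \<in> ?R" if "p \<in> X" for p
  proof -
    have "lv p = lv c \<or> lv p + 1 = lv c \<or> lv p + 1 < lv c" using top[OF that] by arith
    then show ?thesis using that unfolding okp_def Rtop_def by (elim disjE) auto
  qed
  have del: "okp lv p y" if "p \<in> X" "y \<in> X" "okp lv p c" for p y
    using top[OF that(1)] top[OF that(2)] sm[OF that(2)] that(3) unfolding okp_def by fastforce
  have Prc: "Pr lv c y \<longleftrightarrow> y \<in> ?R" if "y \<in> X" for y
    using sm[OF that] that unfolding Pr_def Rtop_def by auto
  have Prx: "\<not> Pr lv x c" if "x \<in> X" for x
    using sm[OF that] top[OF that] unfolding Pr_def by auto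
  have pins: "pairs lv (ins i c L') = pairs lv L' + cnt ?R (drop i L')" if "set L' = X" for L' i
  proof -
    have "pairs lv (ins i c L') = pairs lv (take i L' @ drop i L') + length (filter (Pr lv c) (drop i L'))
           + length (filter (\<lambda>x. Pr lv x c) (take i L'))"
      unfolding ins_def by (rule pairs_ins_gen)
    also have "filter (Pr lv c) (drop i L') = filter (\<lambda>x. x \<in> ?R) (drop i L')"
      by (rule filter_cong_set) (use Prc that in \<open>auto dest: in_set_dropD\<close>)
    also have "filter (\<lambda>x. Pr lv x c) (take i L') = []"
      using Prx that by (auto simp: filter_empty_conv dest: in_set_takeD)
    finally show ?thesis by (simp add: cnt_def)
  qed
  show ?thesis
  proof (rule gen_fiber[where P = "\<lambda>L' i. i = 0 \<or> L' ! (i - 1) \<in> ?R" and Pz = "\<lambda>L' i. i = 0 \<longrightarrow> z"])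
    show "finite X" by fact
    show "c \<notin> X" by fact
  next
    fix A B assume v: "valid lv (A @ c # B)" and sA: "set A \<subseteq> X" and sB: "set B \<subseteq> X"
    from v have vA: "valid lv A" and vB: "valid lv B" and l: "A = [] \<or> okp lv (last A) c"
      unfolding valid_ins3 by auto
    have "valid lv (A @ B)"
      unfolding valid_app using vA vB l del sA sB by (metis hd_in_set last_in_set subsetD)
    moreover have "length A = 0 \<or> (A @ B) ! (length A - 1) \<in> ?R"
    proof (cases "A = []")
      case False
      then have "(A @ B) ! (length A - 1) = last A" by (simp add: nth_append last_conv_nth)
      then show ?thesis using l False okp_iff sA by (metis last_in_set subsetD)
    qed simp
    ultimately show "valid lv (A @ B) \<and> (length A = 0 \<or> (A @ B) ! (length A - 1) \<in> ?R)" by blast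
  next
    fix L' i assume L': "L' \<in> Sh lv X" and i: "i \<le> length L'" and p: "i = 0 \<or> L' ! (i - 1) \<in> ?R"
    have vL: "valid lv (take i L' @ drop i L')" using L' by (simp add: Sh_def)
    then have vt: "valid lv (take i L')" and vd: "valid lv (drop i L')" unfolding valid_app by auto
    have sL: "set L' = X" using L' by (simp add: Sh_def)
    have a: "take i L' = [] \<or> okp lv (last (take i L')) c"
    proof (cases "i = 0")
      case False
      then have "last (take i L') = L' ! (i - 1)" using i by (simp add: last_take_nth)
      moreover have "L' ! (i-1) \<in> X" using sL i False by auto
      ultimately show ?thesis using p False okp_iff by auto
    qed simp
    have b: "drop i L' = [] \<or> okp lv c (hd (drop i L'))"
    proof (cases "drop i L' = []")
      case False
      then have "hd (drop i L') \<in> X" using sL by (metis hd_in_set in_set_dropD)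
      then show ?thesis using okc by blast
    qed simp
    show "valid lv (ins i c L')" unfolding ins_def valid_ins3 using vt vd a b by blast
  next
    fix L' i assume L': "L' \<in> Sh lv X" and i: "i \<le> length L'" and p: "i = 0 \<or> L' ! (i - 1) \<in> ?R"
    show "Q (ins i c L') \<longleftrightarrow> Q' L' \<and> (i = 0 \<longrightarrow> z)" by (rule H[OF L' i p])
  next
    fix L' assume L': "L' \<in> Sh lv X" and "Q' L'"
    have sL: "set L' = X" and dL: "distinct L'" using L' by (auto simp: Sh_def)
    have "(\<Sum>i\<in>{i. i \<le> length L' \<and> (i = 0 \<or> L' ! (i - 1) \<in> ?R) \<and> (i = 0 \<longrightarrow> z)}. q ^ pairs lv (ins i c L'))
        = (\<Sum>i\<in>{i. i \<le> length L' \<and> (i = 0 \<or> L' ! (i - 1) \<in> ?R) \<and> (i = 0 \<longrightarrow> z)}. q ^ pairs lv L' * q ^ cnt ?R (drop i L'))"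
      by (rule sum.cong[OF refl]) (simp add: pins[OF sL] power_add)
    also have "\<dots> = q ^ pairs lv L' * qint (cnt ?R L' + (if z then 1 else 0)) q"
      by (simp only: sum_distrib_left[symmetric] possum_top')
    also have "cnt ?R L' = card ?R" using cnt_card[OF dL] sL by (auto simp: Rtop_def)
    finally show "(\<Sum>i\<in>{i. i \<le> length L' \<and> (i = 0 \<or> L' ! (i - 1) \<in> ?R) \<and> (i = 0 \<longrightarrow> z)}. q ^ pairs lv (ins i c L'))
        = q ^ pairs lv L' * qint (card ?R + (if z then 1 else 0)) q" .
  qed
qed

lemma bot_fiber:
  fixes q :: "'a::comm_ring_1"
  assumes fin: "finite X" and cX: "c \<notin> X"
    and bot: "\<And>x. x \<in> X \<Longrightarrow> lv c \<le> lv x" and lg: "\<And>x. x \<in> X \<Longrightarrow> lv x = lv c \<Longrightarrow> x < c"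
    and H: "\<And>L' i. L' \<in> Sh lv X \<Longrightarrow> i \<le> length L' \<Longrightarrow> (i = length L' \<or> L' ! i \<in> Rbot lv X c)
              \<Longrightarrow> (Q (ins i c L') \<longleftrightarrow> Q' L' \<and> (i = length L' \<longrightarrow> z))"
  shows "(\<Sum>L\<in>{L\<in>Sh lv (insert c X). Q L}. q ^ pairs lv L)
       = (\<Sum>L'\<in>{L'\<in>Sh lv X. Q' L'}. q ^ pairs lv L') * qint (card (Rbot lv X c) + (if z then 1 else 0)) q"
proof -
  let ?R = "Rbot lv X c"
  have okc: "okp lv p c" if "p \<in> X" for p using bot[OF that] by (simp add: okp_def)
  have okp_iff: "okp lv c y \<longleftrightarrow> y \<in> ?R" if "y \<in> X" for y
  proof -
    have "lv y = lv c \<or> lv y = lv c + 1 \<or> lv c + 1 < lv y" using bot[OF that] by arith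
    then show ?thesis using that unfolding okp_def Rbot_def by (elim disjE) auto
  qed
  have del: "okp lv p y" if "p \<in> X" "y \<in> X" "okp lv c y" for p y
    using bot[OF that(1)] bot[OF that(2)] lg[OF that(1)] that(3) by (auto simp: okp_def)
  have Prc: "Pr lv x c \<longleftrightarrow> x \<in> ?R" if "x \<in> X" for x
    using lg[OF that] that by (auto simp: Pr_def Rbot_def)
  have Prx: "\<not> Pr lv c y" if "y \<in> X" for y
    using lg[OF that] bot[OF that] by (auto simp: Pr_def)
  have pins: "pairs lv (ins i c L') = pairs lv L' + cnt ?R (take i L')" if "set L' = X" for L' i
  proof -
    have "pairs lv (ins i c L') = pairs lv (take i L' @ drop i L') + length (filter (Pr lv c) (drop i L'))
           + length (filter (\<lambda>x. Pr lv x c) (take i L'))"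
      unfolding ins_def by (rule pairs_ins_gen)
    also have "filter (\<lambda>x. Pr lv x c) (take i L') = filter (\<lambda>x. x \<in> ?R) (take i L')"
      by (rule filter_cong_set) (use Prc that in \<open>auto dest: in_set_takeD\<close>)
    also have "filter (Pr lv c) (drop i L') = []"
      using Prx that by (auto simp: filter_empty_conv dest: in_set_dropD)
    finally show ?thesis by (simp add: cnt_def)
  qed
  show ?thesis
  proof (rule gen_fiber[where P = "\<lambda>L' i. i = length L' \<or> L' ! i \<in> ?R" and Pz = "\<lambda>L' i. i = length L' \<longrightarrow> z"])
    show "finite X" by fact
    show "c \<notin> X" by fact
  next
    fix A B assume v: "valid lv (A @ c # B)" and sA: "set A \<subseteq> X" and sB: "set B \<subseteq> X"
    from v have vA: "valid lv A" and vB: "valid lv B" and l: "B = [] \<or> okp lv c (hd B)"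
      unfolding valid_ins3 by auto
    have "valid lv (A @ B)"
      unfolding valid_app using vA vB l del sA sB by (metis hd_in_set last_in_set subsetD)
    moreover have "length A = length (A @ B) \<or> (A @ B) ! (length A) \<in> ?R"
    proof (cases "B = []")
      case False
      then have "(A @ B) ! (length A) = hd B" by (simp add: nth_append hd_conv_nth)
      then show ?thesis using l False okp_iff sB by (metis hd_in_set subsetD)
    qed simp
    ultimately show "valid lv (A @ B) \<and> (length A = length (A @ B) \<or> (A @ B) ! (length A) \<in> ?R)" by blast
  next
    fix L' i assume L': "L' \<in> Sh lv X" and i: "i \<le> length L'" and p: "i = length L' \<or> L' ! i \<in> ?R"
    have vL: "valid lv (take i L' @ drop i L')" using L' by (simp add: Sh_def)
    then have vt: "valid lv (take i L')" and vd: "valid lv (drop i L')" unfolding valid_app by auto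
    have sL: "set L' = X" using L' by (simp add: Sh_def)
    have a: "take i L' = [] \<or> okp lv (last (take i L')) c"
    proof (cases "take i L' = []")
      case False
      then have "last (take i L') \<in> X" using sL by (metis last_in_set in_set_takeD)
      then show ?thesis using okc by blast
    qed simp
    have b: "drop i L' = [] \<or> okp lv c (hd (drop i L'))"
    proof (cases "i = length L'")
      case False
      then have "hd (drop i L') = L' ! i" using i by (simp add: hd_drop_nth)
      moreover have "L' ! i \<in> X" using sL i False by auto
      ultimately show ?thesis using p False okp_iff by auto
    qed simp
    show "valid lv (ins i c L')" unfolding ins_def valid_ins3 using vt vd a b by blast
  next
    fix L' i assume L': "L' \<in> Sh lv X" and i: "i \<le> length L'" and p: "i = length L' \<or> L' ! i \<in> ?R"
    show "Q (ins i c L') \<longleftrightarrow> Q' L' \<and> (i = length L' \<longrightarrow> z)" by (rule H[OF L' i p])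
  next
    fix L' assume L': "L' \<in> Sh lv X" and "Q' L'"
    have sL: "set L' = X" and dL: "distinct L'" using L' by (auto simp: Sh_def)
    have "(\<Sum>i\<in>{i. i \<le> length L' \<and> (i = length L' \<or> L' ! i \<in> ?R) \<and> (i = length L' \<longrightarrow> z)}. q ^ pairs lv (ins i c L'))
        = (\<Sum>i\<in>{i. i \<le> length L' \<and> (i = length L' \<or> L' ! i \<in> ?R) \<and> (i = length L' \<longrightarrow> z)}. q ^ pairs lv L' * q ^ cnt ?R (take i L'))"
      by (rule sum.cong[OF refl]) (simp add: pins[OF sL] power_add)
    also have "\<dots> = q ^ pairs lv L' * qint (cnt ?R L' + (if z then 1 else 0)) q"
      by (simp only: sum_distrib_left[symmetric] possum_bot')
    also have "cnt ?R L' = card ?R" using cnt_card[OF dL] sL by (auto simp: Rbot_def)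
    finally show "(\<Sum>i\<in>{i. i \<le> length L' \<and> (i = length L' \<or> L' ! i \<in> ?R) \<and> (i = length L' \<longrightarrow> z)}. q ^ pairs lv (ins i c L'))
        = q ^ pairs lv L' * qint (card ?R + (if z then 1 else 0)) q" .
  qed
qed


definition QJ :: "(nat \<Rightarrow> int) \<Rightarrow> int \<Rightarrow> nat list \<Rightarrow> bool" where
  "QJ lv j L \<longleftrightarrow> lv (hd L) \<le> j \<and> j \<le> lv (last L)"

definition GFJ :: "(nat \<Rightarrow> int) \<Rightarrow> int \<Rightarrow> nat set \<Rightarrow> 'a::comm_ring_1 \<Rightarrow> 'a" where
  "GFJ lv j X q = (\<Sum>L\<in>{L\<in>Sh lv X. QJ lv j L}. q ^ pairs lv L)"

definition wt :: "(nat \<Rightarrow> int) \<Rightarrow> nat set \<Rightarrow> nat \<Rightarrow> nat" where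
  "wt lv X c = card {x\<in>X. lv x = lv c \<and> c < x} + card {x\<in>X. lv x + 1 = lv c \<and> x < c}"

definition ws :: "(nat \<Rightarrow> int) \<Rightarrow> nat set \<Rightarrow> nat \<Rightarrow> nat" where
  "ws lv X c = card {x\<in>X. lv x = lv c \<and> x < c} + card {x\<in>X. lv x = lv c + 1 \<and> c < x}"

definition qfact :: "nat \<Rightarrow> 'a::comm_ring_1 \<Rightarrow> 'a" where
  "qfact m q = (\<Prod>i=1..m. qint i q)"

lemma qfact_Suc: "qfact (Suc m) q = qfact m q * qint (Suc m) q"
  by (simp add: qfact_def)

lemma hd_ins: "L \<noteq> [] \<Longrightarrow> hd (ins i c L) = (if i = 0 then c else hd L)"
  by (cases L) (auto simp: ins_def)

lemma last_ins: "last (ins i c L) = (if length L \<le> i then c else last L)"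
  by (auto simp: ins_def)

lemma Sh_single: "Sh lv {c} = {[c]}"
proof (rule set_eqI, rule iffI)
  fix L assume "L \<in> Sh lv {c}"
  then have d: "distinct L" and s: "set L = {c}" by (auto simp: Sh_def)
  then have "length L = 1" using distinct_card[OF d] by simp
  then obtain x where "L = [x]" by (metis One_nat_def length_0_conv length_Suc_conv)
  then show "L \<in> {[c]}" using s by simp
qed (simp add: Sh_def valid_def)

lemma Sh_nonempty: "L \<in> Sh lv X \<Longrightarrow> X \<noteq> {} \<Longrightarrow> L \<noteq> []"
  by (auto simp: Sh_def)

lemma Sh_mem: "L \<in> Sh lv X \<Longrightarrow> x \<in> set L \<Longrightarrow> x \<in> X"
  by (auto simp: Sh_def)

lemma up_lemma:
  fixes q :: "'a::comm_ring_1"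
  assumes "finite X" "\<And>x. x \<in> X \<Longrightarrow> j \<le> lv x" "\<exists>x\<in>X. lv x = j"
  shows "GFJ lv j X q = qfact (card {x\<in>X. lv x = j}) q * (\<Prod>c\<in>{x\<in>X. j < lv x}. qint (wt lv X c) q)"
  using assms
proof (induction "card X" arbitrary: X rule: less_induct)
  case less
  note fin = less.prems(1) and ge = less.prems(2) and ex = less.prems(3)
  have ne: "X \<noteq> {}" using ex by auto
  define M where "M = Max (lv ` X)"
  have M: "\<And>x. x \<in> X \<Longrightarrow> lv x \<le> M" using fin unfolding M_def by simp
  have MX: "M \<in> lv ` X" using fin ne unfolding M_def by simp
  define Tp where "Tp = {x\<in>X. lv x = M}"
  have finTp: "finite Tp" and neTp: "Tp \<noteq> {}" using fin MX by (auto simp: Tp_def)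
  define c0 where "c0 = Min Tp"
  have c0T: "c0 \<in> Tp" using finTp neTp unfolding c0_def by simp
  then have c0X: "c0 \<in> X" and lc0: "lv c0 = M" by (auto simp: Tp_def)
  define X' where "X' = X - {c0}"
  have XX': "X = insert c0 X'" and c0X': "c0 \<notin> X'" using c0X by (auto simp: X'_def)
  have finX': "finite X'" using fin by (simp add: X'_def)
  have top: "\<And>x. x \<in> X' \<Longrightarrow> lv x \<le> lv c0" using M lc0 by (auto simp: X'_def)
  have sm: "\<And>x. x \<in> X' \<Longrightarrow> lv x = lv c0 \<Longrightarrow> c0 < x"
  proof -
    fix x assume x: "x \<in> X'" "lv x = lv c0"
    then have "x \<in> Tp" using lc0 by (auto simp: Tp_def X'_def)
    then have "c0 \<le> x" using finTp unfolding c0_def by simp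
    moreover have "x \<noteq> c0" using x by (auto simp: X'_def)
    ultimately show "c0 < x" by simp
  qed
  have cardlt: "card X' < card X" unfolding X'_def by (rule card_Diff1_less[OF fin c0X])
  show ?case
  proof (cases "M = j")
    case True
    have allj: "\<And>x. x \<in> X \<Longrightarrow> lv x = j" using M ge True by force
    have e1: "{x\<in>X. j < lv x} = {}" using allj by auto
    show ?thesis
    proof (cases "X' = {}")
      case True
      then have "X = {c0}" using XX' by simp
      then have X1: "X = {c0}" .
      have a: "{L\<in>Sh lv X. QJ lv j L} = {[c0]}" using X1 allj c0X by (auto simp: Sh_single QJ_def)
      have b: "{x\<in>X. lv x = j} = {c0}" using X1 allj by auto
      show ?thesis unfolding GFJ_def a b e1 by (simp add: qfact_def qint_def)
    next
      case False
      have "GFJ lv j X q = (\<Sum>L\<in>{L\<in>Sh lv (insert c0 X'). QJ lv j L}. q ^ pairs lv L)"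
        unfolding GFJ_def XX' ..
      also have "\<dots> = GFJ lv j X' q * qint (card (Rtop lv X' c0) + (if True then 1 else 0)) q"
        unfolding GFJ_def
      proof (rule top_fiber[where lv=lv and X=X' and c=c0, OF finX' c0X' top sm])
        fix L' i assume L': "L' \<in> Sh lv X'" and i: "i \<le> length L'"
        have ne': "L' \<noteq> []" using Sh_nonempty[OF L' False] .
        have "hd L' \<in> X'" "last L' \<in> X'" using ne' L' by (auto simp: Sh_def)
        moreover have "hd (ins i c0 L') \<in> X" "last (ins i c0 L') \<in> X"
          using ne' L' c0X by (auto simp: hd_ins last_ins Sh_def XX')
        ultimately show "QJ lv j (ins i c0 L') \<longleftrightarrow> QJ lv j L' \<and> (i = 0 \<longrightarrow> True)"
          using allj XX' by (auto simp: QJ_def)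
      qed
      also have "Rtop lv X' c0 = X'" using allj XX' lc0 True by (auto simp: Rtop_def)
      also have "GFJ lv j X' q = qfact (card {x\<in>X'. lv x = j}) q * (\<Prod>c\<in>{x\<in>X'. j < lv x}. qint (wt lv X' c) q)"
        using less.hyps[OF cardlt finX'] ge False allj by (auto simp: XX')
      also have "{x\<in>X'. lv x = j} = X'" using allj XX' by auto
      also have "{x\<in>X'. j < lv x} = {}" using allj XX' by auto
      finally have r: "GFJ lv j X q = qfact (card X') q * (\<Prod>c\<in>{}. qint (wt lv X' c) q) * qint (card X' + (if True then 1 else 0)) q" .
      have "{x\<in>X. lv x = j} = X" using allj by auto
      then show ?thesis unfolding r e1 using XX' c0X' finX' by (simp add: qfact_Suc)
    qed
  next
    case False
    then have Mj: "j < M" using ge c0X lc0 by force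
    obtain x0 where x0: "x0 \<in> X" "lv x0 = j" using ex by blast
    have x0X': "x0 \<in> X'" using x0 lc0 Mj by (auto simp: X'_def)
    then have neX': "X' \<noteq> {}" by auto
    have "GFJ lv j X q = (\<Sum>L\<in>{L\<in>Sh lv (insert c0 X'). QJ lv j L}. q ^ pairs lv L)"
      unfolding GFJ_def XX' ..
    also have "\<dots> = GFJ lv j X' q * qint (card (Rtop lv X' c0) + (if False then 1 else 0)) q"
      unfolding GFJ_def
    proof (rule top_fiber[where lv=lv and X=X' and c=c0, OF finX' c0X' top sm])
      fix L' i assume L': "L' \<in> Sh lv X'" and i: "i \<le> length L'" and p: "i = 0 \<or> L' ! (i - 1) \<in> Rtop lv X' c0"
      have ne': "L' \<noteq> []" using Sh_nonempty[OF L' neX'] .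
      show "QJ lv j (ins i c0 L') \<longleftrightarrow> QJ lv j L' \<and> (i = 0 \<longrightarrow> False)"
      proof (cases "i = 0")
        case True
        then show ?thesis using ne' lc0 Mj by (simp add: QJ_def hd_ins)
      next
        case False
        have h: "hd (ins i c0 L') = hd L'" using ne' False by (simp add: hd_ins)
        show ?thesis
        proof (cases "length L' \<le> i")
          case True
          then have ii: "i = length L'" using i by simp
          have "last L' = L' ! (i - 1)" using ii ne' by (simp add: last_conv_nth)
          then have "last L' \<in> Rtop lv X' c0" using p False by simp
          then have "j \<le> lv (last L')" using lc0 Mj by (auto simp: Rtop_def)
          then show ?thesis using h True lc0 Mj False by (simp add: QJ_def last_ins)
        next
          case False
          then show ?thesis using h \<open>i \<noteq> 0\<close> by (simp add: QJ_def last_ins)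
        qed
      qed
    qed
    also have "card (Rtop lv X' c0) = wt lv X c0"
    proof -
      have "Rtop lv X' c0 = {x\<in>X. lv x = lv c0 \<and> c0 < x} \<union> {x\<in>X. lv x + 1 = lv c0 \<and> x < c0}"
        using sm XX' c0X' by (auto simp: Rtop_def)
      moreover have "{x\<in>X. lv x = lv c0 \<and> c0 < x} \<inter> {x\<in>X. lv x + 1 = lv c0 \<and> x < c0} = {}" by auto
      ultimately show ?thesis unfolding wt_def using fin by (simp add: card_Un_disjoint)
    qed
    also have "GFJ lv j X' q = qfact (card {x\<in>X'. lv x = j}) q * (\<Prod>c\<in>{x\<in>X'. j < lv x}. qint (wt lv X' c) q)"
      using less.hyps[OF cardlt finX'] ge x0X' x0 XX' by auto
    also have "{x\<in>X'. lv x = j} = {x\<in>X. lv x = j}" using XX' lc0 Mj by auto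
    also have "(\<Prod>c\<in>{x\<in>X'. j < lv x}. qint (wt lv X' c) q) = (\<Prod>c\<in>{x\<in>X'. j < lv x}. qint (wt lv X c) q)"
    proof (rule prod.cong[OF refl])
      fix c assume c: "c \<in> {x\<in>X'. j < lv x}"
      have "{x\<in>X. lv x = lv c \<and> c < x} = {x\<in>X'. lv x = lv c \<and> c < x}"
        using c sm[of c] XX' by auto
      moreover have "{x\<in>X. lv x + 1 = lv c \<and> x < c} = {x\<in>X'. lv x + 1 = lv c \<and> x < c}"
        using c top[of c] XX' by auto
      ultimately show "qint (wt lv X' c) q = qint (wt lv X c) q" by (simp add: wt_def)
    qed
    finally have r: "GFJ lv j X q = qfact (card {x\<in>X. lv x = j}) q * (\<Prod>c\<in>{x\<in>X'. j < lv x}. qint (wt lv X c) q) * qint (wt lv X c0 + (if False then 1 else 0)) q" .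
    have "{x\<in>X. j < lv x} = insert c0 {x\<in>X'. j < lv x}" using XX' lc0 Mj by auto
    then show ?thesis unfolding r using finX' c0X' by (simp add: mult_ac)
  qed
qed

lemma down_lemma:
  fixes q :: "'a::comm_ring_1"
  assumes "finite X" "\<exists>x\<in>X. lv x = j"
  shows "GFJ lv j X q = GFJ lv j {x\<in>X. j \<le> lv x} q * (\<Prod>c\<in>{x\<in>X. lv x < j}. qint (ws lv X c) q)"
  using assms
proof (induction "card {x\<in>X. lv x < j}" arbitrary: X rule: less_induct)
  case less
  note fin = less.prems(1) and ex = less.prems(2)
  show ?case
  proof (cases "{x\<in>X. lv x < j} = {}")
    case True
    then have "{x\<in>X. j \<le> lv x} = X" by force
    then show ?thesis unfolding True by simp
  next
    case False
    have ne: "X \<noteq> {}" using ex by auto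
    define m where "m = Min (lv ` X)"
    have m: "\<And>x. x \<in> X \<Longrightarrow> m \<le> lv x" using fin unfolding m_def by simp
    have mX: "m \<in> lv ` X" using fin ne unfolding m_def by simp
    have mj: "m < j" using False m by force
    define Bt where "Bt = {x\<in>X. lv x = m}"
    have finBt: "finite Bt" and neBt: "Bt \<noteq> {}" using fin mX by (auto simp: Bt_def)
    define c0 where "c0 = Max Bt"
    have c0B: "c0 \<in> Bt" using finBt neBt unfolding c0_def by simp
    then have c0X: "c0 \<in> X" and lc0: "lv c0 = m" by (auto simp: Bt_def)
    define X' where "X' = X - {c0}"
    have XX': "X = insert c0 X'" and c0X': "c0 \<notin> X'" using c0X by (auto simp: X'_def)
    have finX': "finite X'" using fin by (simp add: X'_def)
    have bot: "\<And>x. x \<in> X' \<Longrightarrow> lv c0 \<le> lv x" using m lc0 by (auto simp: X'_def)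
    have lg: "\<And>x. x \<in> X' \<Longrightarrow> lv x = lv c0 \<Longrightarrow> x < c0"
    proof -
      fix x assume x: "x \<in> X'" "lv x = lv c0"
      then have "x \<in> Bt" using lc0 by (auto simp: Bt_def X'_def)
      then have "x \<le> c0" using finBt unfolding c0_def by simp
      moreover have "x \<noteq> c0" using x by (auto simp: X'_def)
      ultimately show "x < c0" by simp
    qed
    obtain x0 where x0: "x0 \<in> X" "lv x0 = j" using ex by blast
    have x0X': "x0 \<in> X'" using x0 lc0 mj by (auto simp: X'_def)
    then have neX': "X' \<noteq> {}" by auto
    have cardlt: "card {x\<in>X'. lv x < j} < card {x\<in>X. lv x < j}"
    proof -
      have "{x\<in>X'. lv x < j} = {x\<in>X. lv x < j} - {c0}" by (auto simp: X'_def)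
      moreover have "c0 \<in> {x\<in>X. lv x < j}" using c0X lc0 mj by simp
      moreover have "finite {x\<in>X. lv x < j}" using fin by simp
      ultimately show ?thesis by (metis card_Diff1_less)
    qed
    have "GFJ lv j X q = (\<Sum>L\<in>{L\<in>Sh lv (insert c0 X'). QJ lv j L}. q ^ pairs lv L)"
      unfolding GFJ_def XX' ..
    also have "\<dots> = GFJ lv j X' q * qint (card (Rbot lv X' c0) + (if False then 1 else 0)) q"
      unfolding GFJ_def
    proof (rule bot_fiber[where lv=lv and X=X' and c=c0, OF finX' c0X' bot lg])
      fix L' i assume L': "L' \<in> Sh lv X'" and i: "i \<le> length L'" and p: "i = length L' \<or> L' ! i \<in> Rbot lv X' c0"
      have ne': "L' \<noteq> []" using Sh_nonempty[OF L' neX'] .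
      show "QJ lv j (ins i c0 L') \<longleftrightarrow> QJ lv j L' \<and> (i = length L' \<longrightarrow> False)"
      proof (cases "i = length L'")
        case True
        then show ?thesis using lc0 mj by (simp add: QJ_def last_ins)
      next
        case False
        then have il: "i < length L'" using i by simp
        have l: "last (ins i c0 L') = last L'" using il by (simp add: last_ins)
        show ?thesis
        proof (cases "i = 0")
          case True
          have "hd L' = L' ! i" using True ne' by (simp add: hd_conv_nth)
          then have "hd L' \<in> Rbot lv X' c0" using p False by simp
          then have "lv (hd L') \<le> j" using lc0 mj by (auto simp: Rbot_def)
          then show ?thesis using l True lc0 mj ne' False by (simp add: QJ_def hd_ins)
        next
          case False
          then show ?thesis using l ne' \<open>i \<noteq> length L'\<close> by (simp add: QJ_def hd_ins)
        qed
      qed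
    qed
    also have "card (Rbot lv X' c0) = ws lv X c0"
    proof -
      have "Rbot lv X' c0 = {x\<in>X. lv x = lv c0 \<and> x < c0} \<union> {x\<in>X. lv x = lv c0 + 1 \<and> c0 < x}"
        using lg XX' c0X' by (auto simp: Rbot_def)
      moreover have "{x\<in>X. lv x = lv c0 \<and> x < c0} \<inter> {x\<in>X. lv x = lv c0 + 1 \<and> c0 < x} = {}" by auto
      ultimately show ?thesis unfolding ws_def using fin by (simp add: card_Un_disjoint)
    qed
    also have "GFJ lv j X' q = GFJ lv j {x\<in>X'. j \<le> lv x} q * (\<Prod>c\<in>{x\<in>X'. lv x < j}. qint (ws lv X' c) q)"
      using less.hyps[OF cardlt finX'] x0X' x0 by auto
    also have "{x\<in>X'. j \<le> lv x} = {x\<in>X. j \<le> lv x}" using XX' lc0 mj by auto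
    also have "(\<Prod>c\<in>{x\<in>X'. lv x < j}. qint (ws lv X' c) q) = (\<Prod>c\<in>{x\<in>X'. lv x < j}. qint (ws lv X c) q)"
    proof (rule prod.cong[OF refl])
      fix c assume c: "c \<in> {x\<in>X'. lv x < j}"
      have "{x\<in>X. lv x = lv c \<and> x < c} = {x\<in>X'. lv x = lv c \<and> x < c}"
        using c lg[of c] XX' by auto
      moreover have "{x\<in>X. lv x = lv c + 1 \<and> c < x} = {x\<in>X'. lv x = lv c + 1 \<and> c < x}"
        using c bot[of c] XX' by auto
      ultimately show "qint (ws lv X' c) q = qint (ws lv X c) q" by (simp add: ws_def)
    qed
    finally have r: "GFJ lv j X q = GFJ lv j {x\<in>X. j \<le> lv x} q * (\<Prod>c\<in>{x\<in>X'. lv x < j}. qint (ws lv X c) q) * qint (ws lv X c0 + (if False then 1 else 0)) q" .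
    have "{x\<in>X. lv x < j} = insert c0 {x\<in>X'. lv x < j}" using XX' lc0 mj by auto
    then show ?thesis unfolding r using finX' c0X' by (simp add: mult_ac)
  qed
qed

lemma GFJ_formula:
  fixes q :: "'a::comm_ring_1"
  assumes "finite X" "\<exists>x\<in>X. lv x = j"
  shows "GFJ lv j X q = qfact (card {x\<in>X. lv x = j}) q * (\<Prod>c\<in>{x\<in>X. j < lv x}. qint (wt lv X c) q)
                         * (\<Prod>c\<in>{x\<in>X. lv x < j}. qint (ws lv X c) q)"
proof -
  let ?H = "{x\<in>X. j \<le> lv x}"
  have "GFJ lv j ?H q = qfact (card {x\<in>?H. lv x = j}) q * (\<Prod>c\<in>{x\<in>?H. j < lv x}. qint (wt lv ?H c) q)"
    using assms by (intro up_lemma) auto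
  also have "{x\<in>?H. lv x = j} = {x\<in>X. lv x = j}" by auto
  also have "{x\<in>?H. j < lv x} = {x\<in>X. j < lv x}" by auto
  also have "(\<Prod>c\<in>{x\<in>X. j < lv x}. qint (wt lv ?H c) q) = (\<Prod>c\<in>{x\<in>X. j < lv x}. qint (wt lv X c) q)"
  proof (rule prod.cong[OF refl])
    fix c assume c: "c \<in> {x\<in>X. j < lv x}"
    have "{x\<in>?H. lv x = lv c \<and> c < x} = {x\<in>X. lv x = lv c \<and> c < x}" using c by auto
    moreover have "{x\<in>?H. lv x + 1 = lv c \<and> x < c} = {x\<in>X. lv x + 1 = lv c \<and> x < c}" using c by auto
    ultimately show "qint (wt lv ?H c) q = qint (wt lv X c) q" by (simp add: wt_def)
  qed
  finally show ?thesis using down_lemma[OF assms, of q] by simp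
qed


definition qi :: "int \<Rightarrow> 'a::comm_ring_1 \<Rightarrow> 'a" where "qi s q = qint (nat s) q"
definition qfi :: "int \<Rightarrow> 'a::comm_ring_1 \<Rightarrow> 'a" where "qfi s q = qfact (nat s) q"

fun PA :: "int \<Rightarrow> bool list \<Rightarrow> 'a::comm_ring_1 \<Rightarrow> 'a" where
  "PA s [] q = 1"
| "PA s (b # w) q = (if b then qi s q * PA (s + 1) w q else PA (s - 1) w q)"

fun PB :: "int \<Rightarrow> bool list \<Rightarrow> 'a::comm_ring_1 \<Rightarrow> 'a" where
  "PB s [] q = 1"
| "PB s (b # w) q = (if b then PB (s + 1) w q else qi (s - 1) q * PB (s - 1) w q)"

definition ec :: "bool list \<Rightarrow> int" where
  "ec w = int (length (filter id w)) - int (length (filter Not w))"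

lemma ec_Cons: "ec (b # w) = (if b then ec w + 1 else ec w - 1)"
  by (simp add: ec_def)

lemma qi_0: "qi 0 q = 0" by (simp add: qi_def qint_def)

lemma qfi_step: "1 \<le> s \<Longrightarrow> qfi s q = qfi (s - 1) q * qi s q"
proof -
  assume "1 \<le> s"
  then have "nat s = Suc (nat (s - 1))" by simp
  then show ?thesis by (simp add: qfi_def qi_def qfact_Suc)
qed

lemma PA_zero: "s \<le> 0 \<Longrightarrow> 1 \<le> s + ec w \<Longrightarrow> PA s w q = 0"
proof (induction w arbitrary: s)
  case Nil
  then show ?case by (simp add: ec_def)
next
  case (Cons b w)
  show ?case
  proof (cases b)
    case True
    show ?thesis
    proof (cases "s = 0")
      case True
      then show ?thesis using \<open>b\<close> by (simp add: qi_0)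
    next
      case False
      then have "PA (s + 1) w q = 0" using Cons.IH[of "s+1"] Cons.prems True by (simp add: ec_Cons)
      then show ?thesis using True by simp
    qed
  next
    case False
    then have "PA (s - 1) w q = 0" using Cons.IH[of "s-1"] Cons.prems by (simp add: ec_Cons)
    then show ?thesis using False by simp
  qed
qed

lemma walk_id: "1 \<le> s \<Longrightarrow> 1 \<le> s + ec w \<Longrightarrow> PB s w q * qfi (s + ec w - 1) q = PA s w q * qfi (s - 1) q"
proof (induction w arbitrary: s)
  case Nil
  then show ?case by (simp add: ec_def)
next
  case (Cons b w)
  show ?case
  proof (cases b)
    case True
    have IH: "PB (s + 1) w q * qfi (s + 1 + ec w - 1) q = PA (s + 1) w q * qfi (s + 1 - 1) q"
      using Cons.IH[of "s+1"] Cons.prems True by (simp add: ec_Cons)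
    have "qfi s q = qfi (s - 1) q * qi s q" using Cons.prems by (simp add: qfi_step)
    then show ?thesis using IH True by (simp add: ec_Cons algebra_simps)
  next
    case False
    show ?thesis
    proof (cases "s = 1")
      case True
      have "PA 0 w q = 0" using PA_zero[of 0 w] Cons.prems True False by (simp add: ec_Cons)
      then show ?thesis using True False by (simp add: qi_0)
    next
      case s1: False
      have IH: "PB (s - 1) w q * qfi (s - 1 + ec w - 1) q = PA (s - 1) w q * qfi (s - 1 - 1) q"
        using Cons.IH[of "s-1"] Cons.prems False s1 by (simp add: ec_Cons)
      have "qfi (s - 1) q = qfi (s - 1 - 1) q * qi (s - 1) q" using Cons.prems s1 by (simp add: qfi_step)
      then show ?thesis using IH False by (simp add: ec_Cons algebra_simps)
    qed
  qed
qed

definition hzl :: "nat set \<Rightarrow> nat set \<Rightarrow> nat list \<Rightarrow> nat \<Rightarrow> int" where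
  "hzl A B zs c = int (length (filter (\<lambda>y. y \<in> B \<and> c < y) zs)) + int (length (filter (\<lambda>y. y \<in> A \<and> y < c) zs))"

definition nBl :: "nat set \<Rightarrow> nat list \<Rightarrow> int" where
  "nBl B zs = int (length (filter (\<lambda>y. y \<in> B) zs))"

lemma conv_PA:
  assumes "sorted_wrt (<) zs" "\<forall>z\<in>set zs. z \<in> A \<or> z \<in> B" "A \<inter> B = {}"
  shows "PA s (map (\<lambda>z. z \<in> A) zs) q = prod_list (map (\<lambda>c. qi (s - nBl B zs + hzl A B zs c) q) (filter (\<lambda>y. y \<in> A) zs))"
  using assms
proof (induction zs arbitrary: s)
  case Nil
  then show ?case by simp
next
  case (Cons z zs)
  have lt: "\<And>c. c \<in> set zs \<Longrightarrow> z < c" using Cons.prems(1) by simp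
  have lt2: "\<And>c. c \<in> set zs \<Longrightarrow> (c < z) = False" using lt less_asym by blast
  have IHa: "\<And>s. PA s (map (\<lambda>z. z \<in> A) zs) q = prod_list (map (\<lambda>c. qi (s - nBl B zs + hzl A B zs c) q) (filter (\<lambda>y. y \<in> A) zs))"
    using Cons.IH Cons.prems by auto
  show ?case
  proof (cases "z \<in> A")
    case True
    have zB: "z \<notin> B" using True Cons.prems(3) by auto
    have e1: "map (\<lambda>c. qi (s - nBl B (z # zs) + hzl A B (z # zs) c) q) (filter (\<lambda>y. y \<in> A) zs)
        = map (\<lambda>c. qi (s + 1 - nBl B zs + hzl A B zs c) q) (filter (\<lambda>y. y \<in> A) zs)"
      by (rule map_cong[OF refl]) (use lt True zB in \<open>auto simp: hzl_def nBl_def lt2 intro!: arg_cong[where f="\<lambda>t. qi t q"]\<close>)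
    have e2: "s - nBl B (z # zs) + hzl A B (z # zs) z = s"
    proof -
      have "filter (\<lambda>y. y \<in> B \<and> z < y) zs = filter (\<lambda>y. y \<in> B) zs"
        by (rule filter_cong_set) (use lt in force)
      moreover have "filter (\<lambda>y. y \<in> A \<and> y < z) zs = []"
        apply (auto simp: filter_empty_conv) using lt less_asym by blast
      ultimately show ?thesis using zB by (simp add: hzl_def nBl_def)
    qed
    have "PA s (map (\<lambda>z. z \<in> A) (z#zs)) q = qi s q * PA (s+1) (map (\<lambda>z. z\<in>A) zs) q" using True by simp
    also have "PA (s+1) (map (\<lambda>z. z\<in>A) zs) q = prod_list (map (\<lambda>c. qi (s + 1 - nBl B zs + hzl A B zs c) q) (filter (\<lambda>y. y \<in> A) zs))"
      by (rule IHa)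
    also have "\<dots> = prod_list (map (\<lambda>c. qi (s - nBl B (z # zs) + hzl A B (z # zs) c) q) (filter (\<lambda>y. y \<in> A) zs))"
      by (rule arg_cong[where f=prod_list, OF e1[symmetric]])
    finally show ?thesis using True e2 by simp
  next
    case False
    then have zB: "z \<in> B" using Cons.prems(2) by auto
    have e1: "map (\<lambda>c. qi (s - nBl B (z # zs) + hzl A B (z # zs) c) q) (filter (\<lambda>y. y \<in> A) zs)
        = map (\<lambda>c. qi (s - 1 - nBl B zs + hzl A B zs c) q) (filter (\<lambda>y. y \<in> A) zs)"
      by (rule map_cong[OF refl]) (use lt False zB in \<open>auto simp: hzl_def nBl_def lt2 intro!: arg_cong[where f="\<lambda>t. qi t q"]\<close>)
    have "PA s (map (\<lambda>z. z \<in> A) (z#zs)) q = PA (s-1) (map (\<lambda>z. z\<in>A) zs) q" using False by simp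
    also have "\<dots> = prod_list (map (\<lambda>c. qi (s - 1 - nBl B zs + hzl A B zs c) q) (filter (\<lambda>y. y \<in> A) zs))"
      by (rule IHa)
    also have "\<dots> = prod_list (map (\<lambda>c. qi (s - nBl B (z # zs) + hzl A B (z # zs) c) q) (filter (\<lambda>y. y \<in> A) zs))"
      by (rule arg_cong[where f=prod_list, OF e1[symmetric]])
    finally show ?thesis using False by simp
  qed
qed

lemma conv_PB:
  assumes "sorted_wrt (<) zs" "\<forall>z\<in>set zs. z \<in> A \<or> z \<in> B" "A \<inter> B = {}"
  shows "PB s (map (\<lambda>z. z \<in> A) zs) q = prod_list (map (\<lambda>c. qi (s - nBl B zs + hzl A B zs c) q) (filter (\<lambda>y. y \<in> B) zs))"
  using assms
proof (induction zs arbitrary: s)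
  case Nil
  then show ?case by simp
next
  case (Cons z zs)
  have lt: "\<And>c. c \<in> set zs \<Longrightarrow> z < c" using Cons.prems(1) by simp
  have lt2: "\<And>c. c \<in> set zs \<Longrightarrow> (c < z) = False" using lt less_asym by blast
  have IHa: "\<And>s. PB s (map (\<lambda>z. z \<in> A) zs) q = prod_list (map (\<lambda>c. qi (s - nBl B zs + hzl A B zs c) q) (filter (\<lambda>y. y \<in> B) zs))"
    using Cons.IH Cons.prems by auto
  show ?case
  proof (cases "z \<in> A")
    case True
    have zB: "z \<notin> B" using True Cons.prems(3) by auto
    have e1: "map (\<lambda>c. qi (s - nBl B (z # zs) + hzl A B (z # zs) c) q) (filter (\<lambda>y. y \<in> B) zs)
        = map (\<lambda>c. qi (s + 1 - nBl B zs + hzl A B zs c) q) (filter (\<lambda>y. y \<in> B) zs)"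
      by (rule map_cong[OF refl]) (use lt True zB in \<open>auto simp: hzl_def nBl_def lt2 intro!: arg_cong[where f="\<lambda>t. qi t q"]\<close>)
    have "PB s (map (\<lambda>z. z \<in> A) (z#zs)) q = PB (s+1) (map (\<lambda>z. z\<in>A) zs) q" using True by simp
    also have "\<dots> = prod_list (map (\<lambda>c. qi (s + 1 - nBl B zs + hzl A B zs c) q) (filter (\<lambda>y. y \<in> B) zs))"
      by (rule IHa)
    also have "\<dots> = prod_list (map (\<lambda>c. qi (s - nBl B (z # zs) + hzl A B (z # zs) c) q) (filter (\<lambda>y. y \<in> B) zs))"
      by (rule arg_cong[where f=prod_list, OF e1[symmetric]])
    finally show ?thesis using zB by simp
  next
    case False
    then have zB: "z \<in> B" using Cons.prems(2) by auto
    have e1: "map (\<lambda>c. qi (s - nBl B (z # zs) + hzl A B (z # zs) c) q) (filter (\<lambda>y. y \<in> B) zs)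
        = map (\<lambda>c. qi (s - 1 - nBl B zs + hzl A B zs c) q) (filter (\<lambda>y. y \<in> B) zs)"
      by (rule map_cong[OF refl]) (use lt False zB in \<open>auto simp: hzl_def nBl_def lt2 intro!: arg_cong[where f="\<lambda>t. qi t q"]\<close>)
    have e2: "s - nBl B (z # zs) + hzl A B (z # zs) z = s - 1"
    proof -
      have "filter (\<lambda>y. y \<in> B \<and> z < y) zs = filter (\<lambda>y. y \<in> B) zs"
        by (rule filter_cong_set) (use lt in force)
      moreover have "filter (\<lambda>y. y \<in> A \<and> y < z) zs = []"
        apply (auto simp: filter_empty_conv) using lt less_asym by blast
      ultimately show ?thesis using zB False by (simp add: hzl_def nBl_def)
    qed
    have "PB s (map (\<lambda>z. z \<in> A) (z#zs)) q = qi (s-1) q * PB (s-1) (map (\<lambda>z. z\<in>A) zs) q" using False by simp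
    also have "PB (s-1) (map (\<lambda>z. z\<in>A) zs) q = prod_list (map (\<lambda>c. qi (s - 1 - nBl B zs + hzl A B zs c) q) (filter (\<lambda>y. y \<in> B) zs))"
      by (rule IHa)
    also have "\<dots> = prod_list (map (\<lambda>c. qi (s - nBl B (z # zs) + hzl A B (z # zs) c) q) (filter (\<lambda>y. y \<in> B) zs))"
      by (rule arg_cong[where f=prod_list, OF e1[symmetric]])
    finally have calc: "PB s (map (\<lambda>z. z \<in> A) (z#zs)) q = qi (s-1) q * prod_list (map (\<lambda>c. qi (s - nBl B (z # zs) + hzl A B (z # zs) c) q) (filter (\<lambda>y. y \<in> B) zs))" .
    have fz: "filter (\<lambda>y. y\<in>B) (z#zs) = z # filter (\<lambda>y. y\<in>B) zs" using zB by simp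
    have "prod_list (map (\<lambda>c. qi (s - nBl B (z # zs) + hzl A B (z # zs) c) q) (filter (\<lambda>y. y \<in> B) (z#zs)))
       = qi (s-1) q * prod_list (map (\<lambda>c. qi (s - nBl B (z # zs) + hzl A B (z # zs) c) q) (filter (\<lambda>y. y \<in> B) zs))"
      unfolding fz list.map prod_list.Cons e2 ..
    then show ?thesis using calc by simp
  qed
qed

lemma len_filter_card: "distinct xs \<Longrightarrow> length (filter P xs) = card {x\<in>set xs. P x}"
  by (simp add: distinct_length_filter Int_def conj_commute)

lemma adj_id:
  fixes q :: "'a::comm_ring_1"
  fixes A B :: "nat set"
  assumes finA: "finite A" and finB: "finite B" and dj: "A \<inter> B = {}" and neA: "A \<noteq> {}" and neB: "B \<noteq> {}"
  shows "qfact (card A - 1) q * (\<Prod>c\<in>B. qint (card {y\<in>B. c < y} + card {y\<in>A. y < c}) q)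
       = qfact (card B - 1) q * (\<Prod>c\<in>A. qint (card {y\<in>B. c < y} + card {y\<in>A. y < c}) q)"
proof -
  let ?h = "\<lambda>c. card {y\<in>B. c < y} + card {y\<in>A. y < c}"
  define zs where "zs = sorted_list_of_set (A \<union> B)"
  have so: "sorted_wrt (<) zs" unfolding zs_def by (rule strict_sorted_list_of_set)
  have dz: "distinct zs" unfolding zs_def by simp
  have sz: "set zs = A \<union> B" unfolding zs_def using finA finB by simp
  have cov: "\<forall>z\<in>set zs. z \<in> A \<or> z \<in> B" using sz by auto
  define w where "w = map (\<lambda>z. z \<in> A) zs"
  have cA: "length (filter (\<lambda>y. y \<in> A) zs) = card A"
  proof -
    have "{x\<in>set zs. x \<in> A} = A" using sz by auto
    then show ?thesis using len_filter_card[OF dz, of "\<lambda>y. y \<in> A"] by simp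
  qed
  have cB: "length (filter (\<lambda>y. y \<in> B) zs) = card B"
  proof -
    have "{x\<in>set zs. x \<in> B} = B" using sz by auto
    then show ?thesis using len_filter_card[OF dz, of "\<lambda>y. y \<in> B"] by simp
  qed
  have cB': "length (filter (\<lambda>y. y \<notin> A) zs) = card B"
  proof -
    have "filter (\<lambda>y. y \<notin> A) zs = filter (\<lambda>y. y \<in> B) zs"
      by (rule filter_cong_set) (use sz dj in auto)
    then show ?thesis using cB by simp
  qed
  have ecw: "ec w = int (card A) - int (card B)"
    unfolding ec_def w_def using cA cB' by (simp add: filter_map comp_def)
  have pA: "card A \<ge> 1" and pB: "card B \<ge> 1" using finA finB neA neB by (auto simp: Suc_le_eq card_gt_0_iff)
  have W: "PB (int (card B)) w q * qfi (int (card B) + ec w - 1) q = PA (int (card B)) w q * qfi (int (card B) - 1) q"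
    by (rule walk_id) (use pA pB ecw in auto)
  have hz: "hzl A B zs c = int (?h c)" for c
  proof -
    have e1: "{x\<in>set zs. x \<in> B \<and> c < x} = {y\<in>B. c < y}" using sz by auto
    have e2: "{x\<in>set zs. x \<in> A \<and> x < c} = {y\<in>A. y < c}" using sz by auto
    have "length (filter (\<lambda>y. y \<in> B \<and> c < y) zs) = card {y\<in>B. c < y}"
      using len_filter_card[OF dz, of "\<lambda>y. y \<in> B \<and> c < y"] e1 by simp
    moreover have "length (filter (\<lambda>y. y \<in> A \<and> y < c) zs) = card {y\<in>A. y < c}"
      using len_filter_card[OF dz, of "\<lambda>y. y \<in> A \<and> y < c"] e2 by simp
    ultimately show ?thesis by (simp add: hzl_def)
  qed
  have nb: "nBl B zs = int (card B)" using cB by (simp add: nBl_def)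
  have sfA: "set (filter (\<lambda>y. y \<in> A) zs) = A" using sz by auto
  have sfB: "set (filter (\<lambda>y. y \<in> B) zs) = B" using sz by auto
  have PAe: "PA (int (card B)) w q = (\<Prod>c\<in>A. qint (?h c) q)"
  proof -
    have "PA (int (card B)) w q = prod_list (map (\<lambda>c. qi (int (card B) - nBl B zs + hzl A B zs c) q) (filter (\<lambda>y. y \<in> A) zs))"
      unfolding w_def by (rule conv_PA[OF so cov dj])
    also have "\<dots> = prod_list (map (\<lambda>c. qint (?h c) q) (filter (\<lambda>y. y \<in> A) zs))"
      by (simp add: nb hz qi_def del: of_nat_add)
    also have "\<dots> = (\<Prod>c\<in>A. qint (?h c) q)"
      using prod.distinct_set_conv_list[of "filter (\<lambda>y. y \<in> A) zs" "\<lambda>c. qint (?h c) q"] dz sfA by simp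
    finally show ?thesis .
  qed
  have PBe: "PB (int (card B)) w q = (\<Prod>c\<in>B. qint (?h c) q)"
  proof -
    have "PB (int (card B)) w q = prod_list (map (\<lambda>c. qi (int (card B) - nBl B zs + hzl A B zs c) q) (filter (\<lambda>y. y \<in> B) zs))"
      unfolding w_def by (rule conv_PB[OF so cov dj])
    also have "\<dots> = prod_list (map (\<lambda>c. qint (?h c) q) (filter (\<lambda>y. y \<in> B) zs))"
      by (simp add: nb hz qi_def del: of_nat_add)
    also have "\<dots> = (\<Prod>c\<in>B. qint (?h c) q)"
      using prod.distinct_set_conv_list[of "filter (\<lambda>y. y \<in> B) zs" "\<lambda>c. qint (?h c) q"] dz sfB by simp
    finally show ?thesis .
  qed
  have f1: "qfi (int (card B) + ec w - 1) q = qfact (card A - 1) q"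
    using ecw pA by (simp add: qfi_def nat_diff_distrib)
  have f2: "qfi (int (card B) - 1) q = qfact (card B - 1) q"
    using pB by (simp add: qfi_def nat_diff_distrib)
  show ?thesis using W PAe PBe f1 f2 by (simp add: mult_ac)
qed


definition Y0 :: "(nat \<Rightarrow> int) \<Rightarrow> nat set \<Rightarrow> int \<Rightarrow> 'a::comm_ring_1 \<Rightarrow> 'a" where
  "Y0 lv C j q = qfact (card {x\<in>C. lv x = j} - 1) q * (\<Prod>c\<in>{x\<in>C. j < lv x}. qint (wt lv C c) q)
                     * (\<Prod>c\<in>{x\<in>C. lv x < j}. qint (ws lv C c) q)"

lemma qint_0: "qint 0 q = 0" by (simp add: qint_def)

lemma qint_add: "qint (a + b) q = qint a q + q ^ a * qint b (q::'a::comm_ring_1)"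
  by (induction b) (simp_all add: qint_Suc qint_0 algebra_simps power_add)

lemma qfact_pos: "1 \<le> m \<Longrightarrow> qfact m q = qint m q * qfact (m - 1) q"
  by (cases m) (simp_all add: qfact_Suc mult_ac)

locale lvl =
  fixes lv :: "nat \<Rightarrow> int" and C :: "nat set" and R :: int
  assumes finC: "finite C"
    and rng: "\<And>c. c \<in> C \<Longrightarrow> 0 \<le> lv c \<and> lv c \<le> R"
    and sur: "\<And>j. 0 \<le> j \<Longrightarrow> j \<le> R \<Longrightarrow> \<exists>c\<in>C. lv c = j"
    and Rnn: "0 \<le> R"
begin

lemma R_nonneg: "0 \<le> R"
  by (rule Rnn)

lemma GFJ_Y: "0 \<le> j \<Longrightarrow> j \<le> R \<Longrightarrow> GFJ lv j C q = qint (card {x\<in>C. lv x = j}) q * Y0 lv C j q"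
proof -
  assume j: "0 \<le> j" "j \<le> R"
  have ne: "1 \<le> card {x\<in>C. lv x = j}" using sur[OF j] finC by (auto simp: Suc_le_eq card_gt_0_iff)
  show ?thesis using GFJ_formula[OF finC sur[OF j], of q] qfact_pos[OF ne, of q]
    by (simp add: Y0_def mult_ac)
qed

lemma Y_step:
  fixes q :: "'a::comm_ring_1"
  assumes j: "1 \<le> j" "j \<le> R"
  shows "Y0 lv C j q = Y0 lv C (j - 1) q"
proof -
  let ?A = "{x\<in>C. lv x = j - 1}" and ?B = "{x\<in>C. lv x = j}"
  let ?h = "\<lambda>c. card {y\<in>?B. c < y} + card {y\<in>?A. y < c}"
  have finA: "finite ?A" and finB: "finite ?B" using finC by auto
  have neA: "?A \<noteq> {}" using sur[of "j-1"] j by auto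
  have neB: "?B \<noteq> {}" using sur[of j] j by auto
  have dj: "?A \<inter> ?B = {}" by auto
  have adj: "qfact (card ?A - 1) q * (\<Prod>c\<in>?B. qint (?h c) q) = qfact (card ?B - 1) q * (\<Prod>c\<in>?A. qint (?h c) q)"
    by (rule adj_id[OF finA finB dj neA neB])
  have wB: "wt lv C c = ?h c" if "c \<in> ?B" for c
  proof -
    have "{x\<in>C. lv x = lv c \<and> c < x} = {y\<in>?B. c < y}" using that by auto
    moreover have "{x\<in>C. lv x + 1 = lv c \<and> x < c} = {y\<in>?A. y < c}" using that by auto
    ultimately show ?thesis by (simp add: wt_def)
  qed
  have sA: "ws lv C c = ?h c" if "c \<in> ?A" for c
  proof -
    have "{x\<in>C. lv x = lv c \<and> x < c} = {y\<in>?A. y < c}" using that by auto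
    moreover have "{x\<in>C. lv x = lv c + 1 \<and> c < x} = {y\<in>?B. c < y}" using that by auto
    ultimately show ?thesis by (simp add: ws_def)
  qed
  have s1: "{x\<in>C. j - 1 < lv x} = ?B \<union> {x\<in>C. j < lv x}" by auto
  have s2: "{x\<in>C. lv x < j} = ?A \<union> {x\<in>C. lv x < j - 1}" by auto
  have p1: "(\<Prod>c\<in>{x\<in>C. j - 1 < lv x}. qint (wt lv C c) q) = (\<Prod>c\<in>?B. qint (?h c) q) * (\<Prod>c\<in>{x\<in>C. j < lv x}. qint (wt lv C c) q)"
    unfolding s1 by (subst prod.union_disjoint) (use finC wB in auto)
  have p2: "(\<Prod>c\<in>{x\<in>C. lv x < j}. qint (ws lv C c) q) = (\<Prod>c\<in>?A. qint (?h c) q) * (\<Prod>c\<in>{x\<in>C. lv x < j - 1}. qint (ws lv C c) q)"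
    unfolding s2 by (subst prod.union_disjoint) (use finC sA in auto)
  have "Y0 lv C (j - 1) q = (qfact (card ?A - 1) q * (\<Prod>c\<in>?B. qint (?h c) q)) * (\<Prod>c\<in>{x\<in>C. j < lv x}. qint (wt lv C c) q)
             * (\<Prod>c\<in>{x\<in>C. lv x < j - 1}. qint (ws lv C c) q)"
    unfolding Y0_def p1 by (simp add: mult_ac)
  also have "\<dots> = (qfact (card ?B - 1) q * (\<Prod>c\<in>?A. qint (?h c) q)) * (\<Prod>c\<in>{x\<in>C. j < lv x}. qint (wt lv C c) q)
             * (\<Prod>c\<in>{x\<in>C. lv x < j - 1}. qint (ws lv C c) q)"
    unfolding adj ..
  also have "\<dots> = Y0 lv C j q"
    unfolding Y0_def p2 by (simp add: mult_ac)
  finally show ?thesis by simp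
qed

lemma Y_const: "0 \<le> j \<Longrightarrow> j \<le> R \<Longrightarrow> Y0 lv C j q = Y0 lv C 0 q"
proof -
  assume j: "0 \<le> j" "j \<le> R"
  have "\<forall>m. int m \<le> R \<longrightarrow> Y0 lv C (int m) q = Y0 lv C 0 q"
  proof
    fix m show "int m \<le> R \<longrightarrow> Y0 lv C (int m) q = Y0 lv C 0 q"
    proof (induction m)
      case (Suc m)
      show ?case
      proof
        assume a: "int (Suc m) \<le> R"
        have "Y0 lv C (int (Suc m)) q = Y0 lv C (int (Suc m) - 1) q"
          by (rule Y_step) (use a in auto)
        also have "int (Suc m) - 1 = int m" by simp
        also have "Y0 lv C (int m) q = Y0 lv C 0 q" using Suc a by simp
        finally show "Y0 lv C (int (Suc m)) q = Y0 lv C 0 q" .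
      qed
    qed simp
  qed
  moreover obtain m where "j = int m" using j(1) nonneg_int_cases by blast
  ultimately show ?thesis using j by simp
qed

definition NN :: "int \<Rightarrow> nat" where "NN g = card {c\<in>C. lv c < g}"

lemma NN_Suc: "NN (g + 1) = NN g + card {c\<in>C. lv c = g}"
proof -
  have e: "{c\<in>C. lv c < g + 1} = {c\<in>C. lv c < g} \<union> {c\<in>C. lv c = g}" by auto
  have "card ({c\<in>C. lv c < g} \<union> {c\<in>C. lv c = g}) = card {c\<in>C. lv c < g} + card {c\<in>C. lv c = g}"
    using finC by (intro card_Un_disjoint) auto
  then show ?thesis unfolding NN_def e .
qed

lemma sum_qint: "(\<Sum>i<m. q ^ NN (int i) * qint (card {c\<in>C. lv c = int i}) q) = qint (NN (int m)) (q::'a::comm_ring_1)"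
proof (induction m)
  case 0
  have e: "{c\<in>C. lv c < int 0} = {}" using rng by force
  have "NN (int 0) = 0" unfolding NN_def e by simp
  then show ?case by (simp add: qint_def)
next
  case (Suc m)
  then show ?case using NN_Suc[of "int m"] by (simp add: qint_add add_ac)
qed

lemma sum_over_levels:
  "(\<Sum>g\<in>{0..R}. q ^ NN g * GFJ lv g C q) = qint (card C) q * Y0 lv C 0 (q::'a::comm_ring_1)"
proof -
  have "(\<Sum>g\<in>{0..R}. q ^ NN g * GFJ lv g C q) = (\<Sum>g\<in>{0..R}. q ^ NN g * qint (card {x\<in>C. lv x = g}) q * Y0 lv C 0 q)"
  proof (rule sum.cong[OF refl])
    fix g assume g: "g \<in> {0..R}"
    have "GFJ lv g C q = qint (card {x\<in>C. lv x = g}) q * Y0 lv C g q" using g by (intro GFJ_Y) auto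
    also have "Y0 lv C g q = Y0 lv C 0 q" using g by (intro Y_const) auto
    finally show "q ^ NN g * GFJ lv g C q = q ^ NN g * qint (card {x\<in>C. lv x = g}) q * Y0 lv C 0 q"
      by (simp add: mult_ac)
  qed
  also have "\<dots> = (\<Sum>g\<in>{0..R}. q ^ NN g * qint (card {x\<in>C. lv x = g}) q) * Y0 lv C 0 q"
    by (simp add: sum_distrib_right)
  also have "(\<Sum>g\<in>{0..R}. q ^ NN g * qint (card {x\<in>C. lv x = g}) q) = qint (card C) q"
  proof -
    have Rs: "{0..R} = int ` {..<nat R + 1}"
      apply (rule set_eqI, rule iffI)
      subgoal for g by (rule image_eqI[where x="nat g"]) auto
      subgoal using R_nonneg by auto
      done
    have "(\<Sum>g\<in>int ` {..<nat R + 1}. q ^ NN g * qint (card {x\<in>C. lv x = g}) q)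
           = (\<Sum>i<nat R + 1. q ^ NN (int i) * qint (card {x\<in>C. lv x = int i}) q)"
      by (subst sum.reindex) (auto simp: inj_on_def)
    also have "\<dots> = qint (NN (int (nat R + 1))) q" by (rule sum_qint)
    also have "NN (int (nat R + 1)) = card C"
    proof -
      have "{c\<in>C. lv c < int (nat R + 1)} = C" using rng R_nonneg by force
      then show ?thesis by (simp add: NN_def)
    qed
    finally show ?thesis unfolding Rs .
  qed
  finally show ?thesis .
qed

end


fun idx :: "nat list \<Rightarrow> nat \<Rightarrow> nat" where
  "idx [] c = 0"
| "idx (x # xs) c = (if x = c then 0 else Suc (idx xs c))"

lemma idx_lt: "c \<in> set xs \<Longrightarrow> idx xs c < length xs"
  by (induction xs) auto

lemma nth_idx: "c \<in> set xs \<Longrightarrow> xs ! idx xs c = c"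
  by (induction xs) auto

lemma idx_nth: "distinct xs \<Longrightarrow> i < length xs \<Longrightarrow> idx xs (xs ! i) = i"
proof (induction xs arbitrary: i)
  case (Cons x xs)
  then show ?case by (cases i) (auto simp: nth_mem)
qed simp

lemma list_eq_idx:
  assumes "distinct L" "distinct L'" "set L = C" "set L' = C" "\<And>c. c \<in> C \<Longrightarrow> idx L c = idx L' c"
  shows "L = L'"
proof (rule nth_equalityI)
  show len: "length L = length L'" using assms distinct_card by metis
  fix i assume i: "i < length L"
  let ?c = "L ! i"
  have c: "?c \<in> C" using i assms(3) by auto
  have "idx L ?c = i" using idx_nth[OF assms(1) i] .
  then have "idx L' ?c = i" using assms(5)[OF c] by simp
  then have "L' ! i = ?c" using nth_idx[of ?c L'] c assms(4) by simp
  then show "L ! i = L' ! i" by simp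
qed

lemma rank_idx:
  fixes \<kappa> :: "nat \<Rightarrow> nat"
  assumes d: "distinct L" and s: "set L = C" and so: "sorted_wrt (<) (map \<kappa> L)" and c: "c \<in> C"
  shows "card {c'\<in>C. \<kappa> c' < \<kappa> c} = idx L c"
proof -
  let ?i = "idx L c"
  have ci: "L ! ?i = c" using nth_idx c s by blast
  have il: "?i < length L" using idx_lt c s by blast
  have lt: "\<kappa> (L ! j) < \<kappa> (L ! k)" if "j < k" "k < length L" for j k
    using sorted_wrt_nth_less[OF so, of j k] that by simp
  have eq: "{c'\<in>C. \<kappa> c' < \<kappa> c} = (\<lambda>j. L ! j) ` {..<?i}"
  proof (rule set_eqI, rule iffI)
    fix c' assume c': "c' \<in> {c'\<in>C. \<kappa> c' < \<kappa> c}"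
    then have cC: "c' \<in> set L" using s by auto
    let ?j = "idx L c'"
    have "L ! ?j = c'" using nth_idx cC by blast
    moreover have jl: "?j < length L" using idx_lt cC by blast
    moreover have "?j < ?i"
    proof (rule ccontr)
      assume "\<not> ?j < ?i"
      then have "?i \<le> ?j" by simp
      then have "\<kappa> (L ! ?i) \<le> \<kappa> (L ! ?j)" using lt[of ?i ?j] jl by (cases "?i = ?j") force+
      then show False using c' ci \<open>L ! ?j = c'\<close> by simp
    qed
    ultimately show "c' \<in> (\<lambda>j. L ! j) ` {..<?i}" by (metis imageI lessThan_iff)
  next
    fix c' assume "c' \<in> (\<lambda>j. L ! j) ` {..<?i}"
    then obtain j where j: "j < ?i" "c' = L ! j" by auto
    then have "\<kappa> c' < \<kappa> c" using lt[of j ?i] il ci by simp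
    moreover have "c' \<in> C" using j il s by auto
    ultimately show "c' \<in> {c'\<in>C. \<kappa> c' < \<kappa> c}" by simp
  qed
  have "inj_on (\<lambda>j. L ! j) {..<?i}" using d il by (auto simp: inj_on_def nth_eq_iff_index_eq)
  then show ?thesis unfolding eq by (simp add: card_image)
qed

lemma row_key:
  fixes f :: "nat \<Rightarrow> nat"
  assumes "c \<in> {1..n}"
  shows "row n f c = card {c'\<in>{1..n}. f c' * (n+1) + c' < f c * (n+1) + c}"
proof -
  have key: "f c' * (n+1) + c' < f c * (n+1) + c \<longleftrightarrow> f c' < f c \<or> (f c' = f c \<and> c' < c)" if "c' \<in> {1..n}" for c'
  proof
    assume a: "f c' * (n+1) + c' < f c * (n+1) + c"
    show "f c' < f c \<or> (f c' = f c \<and> c' < c)"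
    proof (rule ccontr)
      assume "\<not> (f c' < f c \<or> (f c' = f c \<and> c' < c))"
      then have "f c < f c' \<or> (f c = f c' \<and> c \<le> c')" by auto
      then show False
      proof
        assume "f c < f c'"
        then have "f c * (n+1) + (n+1) \<le> f c' * (n+1)"
          by (metis Suc_le_eq add.commute mult.commute mult_Suc_right mult_le_mono2 Suc_eq_plus1)
        then show False using a assms by auto
      next
        assume "f c = f c' \<and> c \<le> c'"
        then show False using a by auto
      qed
    qed
  next
    assume "f c' < f c \<or> (f c' = f c \<and> c' < c)"
    then show "f c' * (n+1) + c' < f c * (n+1) + c"
    proof
      assume "f c' < f c"
      then have "f c' * (n+1) + (n+1) \<le> f c * (n+1)"
        by (metis Suc_le_eq add.commute mult.commute mult_Suc_right mult_le_mono2 Suc_eq_plus1)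
      then show ?thesis using that by auto
    qed auto
  qed
  have "{c'\<in>{1..n}. f c' * (n+1) + c' < f c * (n+1) + c} = {c'\<in>{1..n}. f c' < f c} \<union> {c'\<in>{1..n}. f c' = f c \<and> c' < c}"
    using key by auto
  moreover have "card ({c'\<in>{1..n}. f c' < f c} \<union> {c'\<in>{1..n}. f c' = f c \<and> c' < c})
      = card {c'\<in>{1..n}. f c' < f c} + card {c'\<in>{1..n}. f c' = f c \<and> c' < c}"
    by (rule card_Un_disjoint) auto
  ultimately show ?thesis by (simp add: row_def)
qed


definition Psi :: "nat \<Rightarrow> (nat \<Rightarrow> int) \<Rightarrow> int \<Rightarrow> nat list \<Rightarrow> (nat \<Rightarrow> nat)" where
  "Psi n lv g L = (\<lambda>c. if c \<in> {1..n} then nat (int (idx L c) + 1 - lv c + g) else undefined)"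

lemma key_lt:
  fixes a b fa fb n :: nat
  assumes "a \<le> n" "b \<le> n" "fa < fb \<or> (fa = fb \<and> a < b)"
  shows "fa * (n+1) + a < fb * (n+1) + b"
  using assms(3)
proof
  assume "fa < fb"
  then have "fa * (n+1) + (n+1) \<le> fb * (n+1)"
    by (metis Suc_le_eq add.commute mult.commute mult_Suc_right mult_le_mono2 Suc_eq_plus1)
  then show ?thesis using assms(1) by auto
qed auto

locale shape_ctx =
  fixes n :: nat and lv :: "nat \<Rightarrow> int" and g :: int and L :: "nat list"
  assumes L: "L \<in> Sh lv {1..n}" and hd: "lv (hd L) \<le> g" and last: "g \<le> lv (last L)" and n1: "1 \<le> n"
begin

abbreviation "f \<equiv> Psi n lv g L"

lemma dL: "distinct L" and sL: "set L = {1..n}" and vL: "valid lv L"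
  using L by (auto simp: Sh_def)

lemma lenL: "length L = n" using distinct_card[OF dL] sL by simp

definition x :: "nat \<Rightarrow> int" where "x i = int i - lv (L ! i) + g"

lemma step: "Suc i < n \<Longrightarrow> x i \<le> x (Suc i) \<and> (x i = x (Suc i) \<longrightarrow> L ! i < L ! Suc i)"
proof -
  assume i: "Suc i < n"
  have "okp lv (L ! i) (L ! Suc i)" using successively_nth[OF vL[unfolded valid_def]] i lenL by simp
  then show ?thesis by (auto simp: okp_def x_def)
qed

lemma mono: "i \<le> j \<Longrightarrow> j < n \<Longrightarrow> x i \<le> x j"
proof (induction j)
  case (Suc j)
  then show ?case using step[of j] by (cases "i = Suc j") force+
qed simp

lemma x_rng: "i < n \<Longrightarrow> 0 \<le> x i \<and> x i \<le> int n - 1"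
proof -
  assume i: "i < n"
  have ne: "L \<noteq> []" using lenL n1 by auto
  have "x 0 = - lv (hd L) + g" using ne by (simp add: x_def hd_conv_nth)
  then have "0 \<le> x 0" using hd by simp
  moreover have "x (n - 1) = int n - 1 - lv (last L) + g" using ne lenL n1 by (simp add: x_def last_conv_nth of_nat_diff)
  then have "x (n - 1) \<le> int n - 1" using last by simp
  ultimately show ?thesis using mono[of 0 i] mono[of i "n-1"] i by force
qed

lemma f_eq: "c \<in> {1..n} \<Longrightarrow> int (f c) = x (idx L c) + 1"
proof -
  assume c: "c \<in> {1..n}"
  have il: "idx L c < n" using idx_lt[of c L] c sL lenL by simp
  have "L ! idx L c = c" using nth_idx[of c L] c sL by simp
  then have "int (idx L c) + 1 - lv c + g = x (idx L c) + 1" by (simp add: x_def)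
  moreover have "0 \<le> x (idx L c)" using x_rng[OF il] by simp
  ultimately show ?thesis using c by (simp add: Psi_def)
qed

lemma f_rng: "c \<in> {1..n} \<Longrightarrow> f c \<in> {1..n}"
proof -
  assume c: "c \<in> {1..n}"
  have il: "idx L c < n" using idx_lt[of c L] c sL lenL by simp
  then show ?thesis using f_eq[OF c] x_rng[OF il] by auto
qed

lemma in_Pref: "f \<in> Pref n"
  unfolding Pref_def using f_rng by (auto simp: PiE_def Pi_def extensional_def Psi_def)

lemma sorted_key: "sorted_wrt (<) (map (\<lambda>c. f c * (n+1) + c) L)"
proof -
  have "successively (<) (map (\<lambda>c. f c * (n+1) + c) L)"
    unfolding successively_conv_nth
  proof (intro allI impI)
    fix i assume "Suc i < length (map (\<lambda>c. f c * (n+1) + c) L)"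
    then have i: "Suc i < n" using lenL by simp
    have a: "L ! i \<in> {1..n}" "L ! Suc i \<in> {1..n}" using i lenL sL nth_mem by (metis Suc_lessD)+
    have ia: "idx L (L ! i) = i" "idx L (L ! Suc i) = Suc i" using idx_nth[OF dL] i lenL by auto
    have "int (f (L ! i)) = x i + 1" "int (f (L ! Suc i)) = x (Suc i) + 1" using f_eq a ia by auto
    then have "f (L ! i) < f (L ! Suc i) \<or> (f (L ! i) = f (L ! Suc i) \<and> L ! i < L ! Suc i)"
      using step[OF i] by (cases "x i = x (Suc i)") auto
    then have "f (L ! i) * (n+1) + L ! i < f (L ! Suc i) * (n+1) + L ! Suc i"
      using a by (intro key_lt) auto
    then show "map (\<lambda>c. f c * (n+1) + c) L ! i < map (\<lambda>c. f c * (n+1) + c) L ! Suc i"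
      using i lenL by simp
  qed
  then show ?thesis by (simp add: successively_conv_sorted_wrt transp_def)
qed

lemma row_f: "c \<in> {1..n} \<Longrightarrow> row n f c = idx L c"
proof -
  assume c: "c \<in> {1..n}"
  have "row n f c = card {c'\<in>{1..n}. f c' * (n+1) + c' < f c * (n+1) + c}" by (rule row_key[OF c])
  also have "\<dots> = idx L c"
    using rank_idx[OF dL sL _ c, of "\<lambda>c. f c * (n+1) + c"] sorted_key by simp
  finally show ?thesis .
qed

lemma diag_f: "c \<in> {1..n} \<Longrightarrow> diag n f c = lv c - g"
proof -
  assume c: "c \<in> {1..n}"
  have "L ! idx L c = c" using nth_idx[of c L] c sL by simp
  then show ?thesis using row_f[OF c] f_eq[OF c] by (simp add: diag_def x_def)
qed

lemma f_lt_iff: "a \<in> {1..n} \<Longrightarrow> b \<in> {1..n} \<Longrightarrow> int (f a) - int (f b) = int (idx L a) - int (idx L b) - (lv a - lv b)"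
proof -
  assume a: "a \<in> {1..n}" and b: "b \<in> {1..n}"
  have "L ! idx L a = a" "L ! idx L b = b" using nth_idx a b sL by auto
  then show ?thesis using f_eq[OF a] f_eq[OF b] by (simp add: x_def)
qed

end


definition drel :: "(nat \<Rightarrow> int) \<Rightarrow> nat \<Rightarrow> nat \<Rightarrow> bool" where
  "drel D a b \<longleftrightarrow> D b \<le> D a \<and> (D a = D b \<longrightarrow> a < b)"

lemma G_lemma:
  assumes "sorted_wrt (drel D) zs" "sorted_wrt (>) ds" "D ` set zs \<subseteq> set ds"
  shows "concat (map (\<lambda>d. sorted_list_of_set {c\<in>set zs. D c = d}) ds) = zs"
  using assms
proof (induction zs)
  case Nil
  then show ?case by (induction ds) auto
next
  case (Cons x xs)
  have rx: "\<And>y. y \<in> set xs \<Longrightarrow> drel D x y" and sx: "sorted_wrt (drel D) xs" using Cons.prems(1) by auto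
  have xn: "x \<notin> set xs" using rx by (auto simp: drel_def)
  have "D x \<in> set ds" using Cons.prems(3) by simp
  then obtain ds1 ds2 where ds: "ds = ds1 @ D x # ds2" by (meson split_list)
  have g1: "\<And>d. d \<in> set ds1 \<Longrightarrow> D x < d" and g2: "\<And>d. d \<in> set ds2 \<Longrightarrow> d < D x"
    using Cons.prems(2) unfolding ds by (auto simp: sorted_wrt_append)
  have IH: "concat (map (\<lambda>d. sorted_list_of_set {c\<in>set xs. D c = d}) ds) = xs"
    using Cons.IH[OF sx Cons.prems(2)] Cons.prems(3) by auto
  have e1: "map (\<lambda>d. sorted_list_of_set {c\<in>set (x#xs). D c = d}) ds1 = map (\<lambda>d. []) ds1"
  proof (rule map_cong[OF refl])
    fix d assume d: "d \<in> set ds1"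
    have "{c\<in>set (x#xs). D c = d} = {}" using g1[OF d] rx by (force simp: drel_def)
    then show "sorted_list_of_set {c\<in>set (x#xs). D c = d} = []" by simp
  qed
  have e1': "map (\<lambda>d. sorted_list_of_set {c\<in>set xs. D c = d}) ds1 = map (\<lambda>d. []) ds1"
  proof (rule map_cong[OF refl])
    fix d assume d: "d \<in> set ds1"
    have "{c\<in>set xs. D c = d} = {}" using g1[OF d] rx by (force simp: drel_def)
    then show "sorted_list_of_set {c\<in>set xs. D c = d} = []" by simp
  qed
  have e2: "map (\<lambda>d. sorted_list_of_set {c\<in>set (x#xs). D c = d}) ds2 = map (\<lambda>d. sorted_list_of_set {c\<in>set xs. D c = d}) ds2"
  proof (rule map_cong[OF refl])
    fix d assume d: "d \<in> set ds2"
    have "{c\<in>set (x#xs). D c = d} = {c\<in>set xs. D c = d}" using g2[OF d] by auto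
    then show "sorted_list_of_set {c\<in>set (x#xs). D c = d} = sorted_list_of_set {c\<in>set xs. D c = d}" by simp
  qed
  have e3: "sorted_list_of_set {c\<in>set (x#xs). D c = D x} = x # sorted_list_of_set {c\<in>set xs. D c = D x}"
  proof -
    have s: "{c\<in>set (x#xs). D c = D x} = insert x {c\<in>set xs. D c = D x}" by auto
    have "sorted_list_of_set (insert x {c\<in>set xs. D c = D x}) = insort x (sorted_list_of_set {c\<in>set xs. D c = D x})"
      by (rule sorted_list_of_set_insert) (use xn in auto)
    also have "\<dots> = x # sorted_list_of_set {c\<in>set xs. D c = D x}"
    proof (rule insort_is_Cons)
      show "\<forall>b\<in>set (sorted_list_of_set {c\<in>set xs. D c = D x}). x \<le> b"
        using rx by (auto simp: drel_def less_imp_le)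
    qed
    finally show ?thesis using s by simp
  qed
  have cat: "concat (map (\<lambda>d. []) ds1) = ([] :: nat list)" by (induction ds1) auto
  have "concat (map (\<lambda>d. sorted_list_of_set {c\<in>set (x#xs). D c = d}) ds)
      = x # (concat (map (\<lambda>d. sorted_list_of_set {c\<in>set xs. D c = d}) ds1) @ sorted_list_of_set {c\<in>set xs. D c = D x}
           @ concat (map (\<lambda>d. sorted_list_of_set {c\<in>set xs. D c = d}) ds2))"
  proof -
    have "concat (map (\<lambda>d. sorted_list_of_set {c\<in>set (x#xs). D c = d}) ds)
        = concat (map (\<lambda>d. sorted_list_of_set {c\<in>set (x#xs). D c = d}) ds1) @ sorted_list_of_set {c\<in>set (x#xs). D c = D x}
          @ concat (map (\<lambda>d. sorted_list_of_set {c\<in>set (x#xs). D c = d}) ds2)"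
      unfolding ds by simp
    also have "\<dots> = x # (concat (map (\<lambda>d. sorted_list_of_set {c\<in>set xs. D c = d}) ds1) @ sorted_list_of_set {c\<in>set xs. D c = D x}
           @ concat (map (\<lambda>d. sorted_list_of_set {c\<in>set xs. D c = d}) ds2))"
      unfolding e1 e1' e2 e3 cat by simp
    finally show ?thesis .
  qed
  also have "\<dots> = x # concat (map (\<lambda>d. sorted_list_of_set {c\<in>set xs. D c = d}) ds)"
    unfolding ds by simp
  finally show ?case using IH by simp
qed

lemma diagword_char:
  fixes f :: "nat \<Rightarrow> nat"
  assumes so: "sorted_wrt (drel (diag n f)) zs" and sz: "set zs = {1..n}"
    and rng: "\<And>c. c \<in> {1..n} \<Longrightarrow> - int n \<le> diag n f c \<and> diag n f c \<le> int n"
  shows "diagword n f = zs"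
proof -
  have ds: "sorted_wrt (>) (rev [- int n..int n])"
    by (simp add: sorted_wrt_rev sorted_wrt_upto)
  have sub: "diag n f ` set zs \<subseteq> set (rev [- int n..int n])" using rng sz by auto
  show ?thesis unfolding diagword_def using G_lemma[OF so ds sub] sz by simp
qed


locale tau_ctx =
  fixes n :: nat and \<tau> :: "nat list"
  assumes n1: "1 \<le> n" and len: "length \<tau> = n" and dist: "distinct \<tau>" and st: "set \<tau> = {1..n}"
begin

abbreviation "ri \<equiv> run_index \<tau>"
definition dlt :: "nat \<Rightarrow> nat" where "dlt i = (if \<tau> ! Suc i < \<tau> ! i then 1 else 0)"
definition R1 :: nat where "R1 = ri (n - 1)"
definition lvt :: "nat \<Rightarrow> int" where "lvt c = int R1 - int (ri (idx \<tau> c))"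

lemma ri_set_fin: "finite {i. i + 1 \<le> p \<and> \<tau> ! i > \<tau> ! (i + 1)}"
  by (rule finite_subset[of _ "{..<p}"]) auto

lemma ri_0: "ri 0 = 0" by (simp add: run_index_def)

lemma ri_Suc: "ri (Suc p) = ri p + dlt p"
proof -
  have e: "{i. i + 1 \<le> Suc p \<and> \<tau> ! i > \<tau> ! (i + 1)} = {i. i + 1 \<le> p \<and> \<tau> ! i > \<tau> ! (i + 1)} \<union> {i. i = p \<and> \<tau> ! i > \<tau> ! (i + 1)}"
    by auto
  have "card ({i. i + 1 \<le> p \<and> \<tau> ! i > \<tau> ! (i + 1)} \<union> {i. i = p \<and> \<tau> ! i > \<tau> ! (i + 1)})
      = card {i. i + 1 \<le> p \<and> \<tau> ! i > \<tau> ! (i + 1)} + card {i. i = p \<and> \<tau> ! i > \<tau> ! (i + 1)}"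
    by (rule card_Un_disjoint) (use ri_set_fin in auto)
  moreover have "card {i. i = p \<and> \<tau> ! i > \<tau> ! (i + 1)} = dlt p"
  proof -
    have "{i. i = p \<and> \<tau> ! i > \<tau> ! (i + 1)} = (if \<tau> ! Suc p < \<tau> ! p then {p} else {})" by auto
    then show ?thesis by (simp add: dlt_def)
  qed
  ultimately show ?thesis unfolding run_index_def e by simp
qed

lemma ri_sum: "ri p = (\<Sum>i<p. dlt i)"
  by (induction p) (simp_all add: ri_0 ri_Suc)

lemma ri_mono: "p \<le> p' \<Longrightarrow> ri p \<le> ri p'"
  by (induction p' ) (auto simp: ri_Suc le_Suc_eq)

lemma ri_eq_le: "i \<le> j \<Longrightarrow> j < n \<Longrightarrow> ri i = ri j \<Longrightarrow> \<tau> ! i \<le> \<tau> ! j"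
proof (induction j)
  case 0
  then show ?case by simp
next
  case (Suc j)
  show ?case
  proof (cases "i = Suc j")
    case False
    then have ij: "i \<le> j" using Suc.prems by simp
    have "ri i \<le> ri j" "ri j \<le> ri (Suc j)" using ri_mono ij by auto
    then have rj: "ri j = ri i" "dlt j = 0" using Suc.prems ri_Suc[of j] by auto
    then have "\<tau> ! i \<le> \<tau> ! j" using Suc.IH[OF ij] Suc.prems by simp
    moreover have "\<tau> ! j \<le> \<tau> ! Suc j" using rj(2) by (auto simp: dlt_def split: if_splits)
    ultimately show ?thesis by simp
  qed simp
qed

lemma lv_nth: "p < n \<Longrightarrow> lvt (\<tau> ! p) = int R1 - int (ri p)"
  using idx_nth[OF dist, of p] len by (simp add: lvt_def)

lemma ri_le_R1: "p < n \<Longrightarrow> ri p \<le> R1"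
  unfolding R1_def by (rule ri_mono) simp

lemma C_eq: "{1..n} = (\<lambda>p. \<tau> ! p) ` {..<n}"
  using st len by (auto simp: set_conv_nth)

lemma inj_tau: "inj_on (\<lambda>p. \<tau> ! p) {..<n}"
  using dist len by (auto simp: inj_on_def nth_eq_iff_index_eq)

lemma mem_C: "c \<in> {1..n} \<Longrightarrow> \<exists>p<n. c = \<tau> ! p"
  using C_eq by auto

lemma lv_rng: "c \<in> {1..n} \<Longrightarrow> 0 \<le> lvt c \<and> lvt c \<le> int R1"
  using mem_C lv_nth ri_le_R1 by fastforce

lemma ri_sur: "v \<le> ri p \<Longrightarrow> \<exists>p'\<le>p. ri p' = v"
proof (induction p arbitrary: v)
  case 0
  then show ?case by (simp add: ri_0)
next
  case (Suc p)
  show ?case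
  proof (cases "v \<le> ri p")
    case True
    then show ?thesis using Suc.IH by (meson le_Suc_eq)
  next
    case False
    then have "v = ri (Suc p)" using Suc.prems ri_Suc[of p] by (auto simp: dlt_def split: if_splits)
    then show ?thesis by blast
  qed
qed

lemma lv_sur: "0 \<le> j \<Longrightarrow> j \<le> int R1 \<Longrightarrow> \<exists>c\<in>{1..n}. lvt c = j"
proof -
  assume j: "0 \<le> j" "j \<le> int R1"
  then obtain p where p: "p \<le> n - 1" "ri p = R1 - nat j" using ri_sur[of "R1 - nat j" "n-1"] by (auto simp: R1_def)
  have pn: "p < n" using p n1 by simp
  have "lvt (\<tau> ! p) = j" using lv_nth[OF pn] p j by simp
  moreover have "\<tau> ! p \<in> {1..n}" using pn len st nth_mem by blast
  ultimately show ?thesis by blast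
qed

lemma lv_drel: "sorted_wrt (drel lvt) \<tau>"
  unfolding sorted_wrt_iff_nth_less
proof (intro allI impI)
  fix i j assume ij: "i < j" "j < length \<tau>"
  then have jn: "j < n" and iN: "i < n" using len by auto
  have m: "ri i \<le> ri j" using ri_mono ij by simp
  have "lvt (\<tau> ! j) \<le> lvt (\<tau> ! i)" using m lv_nth[OF jn] lv_nth[OF iN] by simp
  moreover have "\<tau> ! i < \<tau> ! j" if "lvt (\<tau> ! i) = lvt (\<tau> ! j)"
  proof -
    have "ri i = ri j" using that lv_nth[OF jn] lv_nth[OF iN] by simp
    then have "\<tau> ! i \<le> \<tau> ! j" using ri_eq_le ij jn by simp
    moreover have "\<tau> ! i \<noteq> \<tau> ! j" using dist ij len by (simp add: nth_eq_iff_index_eq)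
    ultimately show ?thesis by simp
  qed
  ultimately show "drel lvt (\<tau> ! i) (\<tau> ! j)" by (simp add: drel_def)
qed

lemma lv_last0: "lvt (\<tau> ! (n - 1)) = 0"
  using lv_nth[of "n-1"] n1 by (simp add: R1_def)

lemma lv_step: "Suc p < n \<Longrightarrow> lvt (\<tau> ! p) = lvt (\<tau> ! Suc p) + int (dlt p)"
  using lv_nth[of p] lv_nth[of "Suc p"] ri_Suc[of p] by simp

lemma sum_shift_lemma:
  fixes d :: "nat \<Rightarrow> nat"
  shows "(\<Sum>p<Suc m. int (\<Sum>i<m. d i) - int (\<Sum>i<p. d i)) = int (\<Sum>i<m. (i+1) * d i)"
proof (induction m)
  case 0
  then show ?case by simp
next
  case (Suc m)
  have "(\<Sum>p<Suc (Suc m). int (\<Sum>i<Suc m. d i) - int (\<Sum>i<p. d i))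
      = (\<Sum>p<Suc m. int (\<Sum>i<Suc m. d i) - int (\<Sum>i<p. d i)) + (int (\<Sum>i<Suc m. d i) - int (\<Sum>i<Suc m. d i))"
    by (simp only: sum.lessThan_Suc)
  also have "(\<Sum>p<Suc m. int (\<Sum>i<Suc m. d i) - int (\<Sum>i<p. d i))
      = (\<Sum>p<Suc m. int (d m) + (int (\<Sum>i<m. d i) - int (\<Sum>i<p. d i)))"
    by (rule sum.cong) auto
  also have "\<dots> = (\<Sum>p<Suc m. int (d m)) + (\<Sum>p<Suc m. int (\<Sum>i<m. d i) - int (\<Sum>i<p. d i))"
    by (rule sum.distrib)
  finally show ?case using Suc by (simp add: algebra_simps)
qed

lemma sum_lv: "(\<Sum>c\<in>{1..n}. lvt c) = int (maj \<tau>)"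
proof -
  obtain m where m: "n = Suc m" using n1 by (cases n) auto
  have "(\<Sum>c\<in>{1..n}. lvt c) = (\<Sum>p<n. lvt (\<tau> ! p))"
    unfolding C_eq by (rule sum.reindex[OF inj_tau, unfolded comp_def])
  also have "\<dots> = (\<Sum>p<n. int (\<Sum>i<m. dlt i) - int (\<Sum>i<p. dlt i))"
  proof -
    have nm: "n - 1 = m" using m by simp
    have R1m: "R1 = (\<Sum>i<m. dlt i)" unfolding R1_def nm by (rule ri_sum)
    show ?thesis by (rule sum.cong[OF refl]) (simp add: lv_nth R1m ri_sum)
  qed
  also have "\<dots> = int (\<Sum>i<m. (i+1) * dlt i)" unfolding m by (rule sum_shift_lemma)
  also have "(\<Sum>i<m. (i+1) * dlt i) = maj \<tau>"
  proof -
    have e: "{i. 1 \<le> i \<and> i < length \<tau> \<and> \<tau> ! (i - 1) > \<tau> ! i} = Suc ` {i \<in> {..<m}. \<tau> ! Suc i < \<tau> ! i}"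
    proof (rule set_eqI, rule iffI)
      fix i assume "i \<in> {i. 1 \<le> i \<and> i < length \<tau> \<and> \<tau> ! (i - 1) > \<tau> ! i}"
      then have i: "1 \<le> i" "i < Suc m" "\<tau> ! (i - 1) > \<tau> ! i" using len m by auto
      then have "i = Suc (i - 1)" by simp
      moreover have "i - 1 \<in> {i \<in> {..<m}. \<tau> ! Suc i < \<tau> ! i}" using i by simp
      ultimately show "i \<in> Suc ` {i \<in> {..<m}. \<tau> ! Suc i < \<tau> ! i}" by (rule image_eqI)
    next
      fix i assume "i \<in> Suc ` {i \<in> {..<m}. \<tau> ! Suc i < \<tau> ! i}"
      then show "i \<in> {i. 1 \<le> i \<and> i < length \<tau> \<and> \<tau> ! (i - 1) > \<tau> ! i}" using len m by auto
    qed
    have "maj \<tau> = (\<Sum>i\<in>Suc ` {i \<in> {..<m}. \<tau> ! Suc i < \<tau> ! i}. i)" unfolding maj_def e ..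
    also have "\<dots> = (\<Sum>i\<in>{i \<in> {..<m}. \<tau> ! Suc i < \<tau> ! i}. Suc i)" by (subst sum.reindex) auto
    also have "\<dots> = (\<Sum>i<m. if \<tau> ! Suc i < \<tau> ! i then Suc i else 0)" by (rule sum.inter_filter) simp
    also have "\<dots> = (\<Sum>i<m. (i+1) * dlt i)" by (rule sum.cong) (auto simp: dlt_def)
    finally show ?thesis by simp
  qed
  finally show ?thesis .
qed

abbreviation "kk \<equiv> last_run_len \<tau>"

lemma P0_eq: "{p. p < n \<and> ri p = R1} = {n - kk..<n}"
proof -
  let ?P = "{p. p < n \<and> ri p = R1}"
  have fin: "finite ?P" by simp
  have ne: "n - 1 \<in> ?P" using n1 by (simp add: R1_def)
  define m0 where "m0 = Min ?P"
  have m0P: "m0 \<in> ?P" using fin ne unfolding m0_def by (metis Min_in empty_iff)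
  have up: "p' \<in> ?P" if "p \<in> ?P" "p \<le> p'" "p' < n" for p p'
    using that ri_mono[of p p'] ri_le_R1[of p'] by auto
  have eqm: "?P = {m0..<n}"
  proof (rule set_eqI, rule iffI)
    fix p assume "p \<in> ?P" then show "p \<in> {m0..<n}" using fin unfolding m0_def by auto
  next
    fix p assume "p \<in> {m0..<n}" then show "p \<in> ?P" using up[OF m0P] by auto
  qed
  have "kk = card ?P" unfolding last_run_len_def using len by (simp add: R1_def)
  then have "kk = n - m0" using eqm by simp
  moreover have "m0 < n" using m0P by simp
  ultimately have "m0 = n - kk" by simp
  then show ?thesis using eqm by simp
qed

lemma kk_le: "kk \<le> n" and kk_pos: "1 \<le> kk"
proof -
  have "n - 1 \<in> {p. p < n \<and> ri p = R1}" using n1 by (simp add: R1_def)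
  then have "n - 1 \<in> {n - kk..<n}" using P0_eq by simp
  then show "1 \<le> kk" using n1 by auto
  have "kk = card {p. p < n \<and> ri p = R1}" unfolding last_run_len_def using len by (simp add: R1_def)
  also have "\<dots> \<le> card {..<n}" by (rule card_mono) auto
  finally show "kk \<le> n" by simp
qed

lemma lv_pos_iff: "p < n \<Longrightarrow> (0 < lvt (\<tau> ! p) \<longleftrightarrow> p < n - kk)"
proof -
  assume p: "p < n"
  have "ri p = R1 \<longleftrightarrow> p \<in> {n - kk..<n}" using P0_eq p by blast
  then show ?thesis using lv_nth[OF p] ri_le_R1[OF p] p by auto
qed

lemma card_pos_conv: "card {p'. p' < n \<and> P (\<tau> ! p')} = card {x\<in>{1..n}. P x}"
proof -
  have "{x\<in>{1..n}. P x} = (\<lambda>p. \<tau> ! p) ` {p'. p' < n \<and> P (\<tau> ! p')}" using C_eq by auto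
  moreover have "inj_on (\<lambda>p. \<tau> ! p) {p'. p' < n \<and> P (\<tau> ! p')}" using inj_tau by (rule inj_on_subset) auto
  ultimately show ?thesis by (simp add: card_image)
qed

lemma kk_lvl: "kk = card {x\<in>{1..n}. lvt x = 0}"
proof -
  have "kk = card {p. p < n \<and> ri p = R1}" unfolding last_run_len_def using len by (simp add: R1_def)
  also have "{p. p < n \<and> ri p = R1} = {p. p < n \<and> lvt (\<tau> ! p) = 0}"
    using lv_nth ri_le_R1 by force
  also have "card \<dots> = card {x\<in>{1..n}. lvt x = 0}" by (rule card_pos_conv)
  finally show ?thesis .
qed

lemma sched_big: "kk < i \<Longrightarrow> i \<le> n \<Longrightarrow> schedule \<tau> i = wt lvt {1..n} (\<tau> ! (n - i))"
proof -
  assume i: "kk < i" "i \<le> n"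
  let ?p = "n - i"
  have p: "?p < n" using i kk_pos by simp
  have a: "{p'. p' < n \<and> ri p' = ri ?p \<and> \<tau> ! p' > \<tau> ! ?p} = {p'. p' < n \<and> (\<lambda>x. lvt x = lvt (\<tau> ! ?p) \<and> \<tau> ! ?p < x) (\<tau> ! p')}"
    using lv_nth p by auto
  have b: "{p'. p' < n \<and> ri p' = ri ?p + 1 \<and> \<tau> ! p' < \<tau> ! ?p} = {p'. p' < n \<and> (\<lambda>x. lvt x + 1 = lvt (\<tau> ! ?p) \<and> x < \<tau> ! ?p) (\<tau> ! p')}"
    using lv_nth p by auto
  have "schedule \<tau> i = card {p'. p' < n \<and> ri p' = ri ?p \<and> \<tau> ! p' > \<tau> ! ?p} + card {p'. p' < n \<and> ri p' = ri ?p + 1 \<and> \<tau> ! p' < \<tau> ! ?p}"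
    unfolding schedule_def using i len by (simp add: Let_def)
  also have "\<dots> = card {x\<in>{1..n}. lvt x = lvt (\<tau> ! ?p) \<and> \<tau> ! ?p < x} + card {x\<in>{1..n}. lvt x + 1 = lvt (\<tau> ! ?p) \<and> x < \<tau> ! ?p}"
    unfolding a b using card_pos_conv[of "\<lambda>x. lvt x = lvt (\<tau> ! ?p) \<and> \<tau> ! ?p < x"]
      card_pos_conv[of "\<lambda>x. lvt x + 1 = lvt (\<tau> ! ?p) \<and> x < \<tau> ! ?p"] by simp
  also have "\<dots> = wt lvt {1..n} (\<tau> ! ?p)" by (simp add: wt_def)
  finally show ?thesis .
qed

lemma sched_prod:
  "(\<Prod>i=1..n. qint (schedule \<tau> i) q) = qfact kk q * (\<Prod>c\<in>{x\<in>{1..n}. 0 < lvt x}. qint (wt lvt {1..n} c) (q::'a::comm_ring_1))"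
proof -
  have sp: "{1..n} = {1..kk} \<union> {kk+1..n}" using kk_le by auto
  have "(\<Prod>i=1..n. qint (schedule \<tau> i) q) = (\<Prod>i\<in>{1..kk}. qint (schedule \<tau> i) q) * (\<Prod>i\<in>{kk+1..n}. qint (schedule \<tau> i) q)"
    unfolding sp by (rule prod.union_disjoint) auto
  also have "(\<Prod>i\<in>{1..kk}. qint (schedule \<tau> i) q) = qfact kk q"
    unfolding qfact_def by (rule prod.cong) (auto simp: schedule_def)
  also have "(\<Prod>i\<in>{kk+1..n}. qint (schedule \<tau> i) q) = (\<Prod>i\<in>{kk+1..n}. qint (wt lvt {1..n} (\<tau> ! (n - i))) q)"
    by (rule prod.cong) (auto simp: sched_big)
  also have "\<dots> = (\<Prod>c\<in>{x\<in>{1..n}. 0 < lvt x}. qint (wt lvt {1..n} c) q)"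
  proof -
    have inj: "inj_on (\<lambda>i. \<tau> ! (n - i)) {kk+1..n}"
    proof (rule inj_onI)
      fix i i' assume "i \<in> {kk+1..n}" "i' \<in> {kk+1..n}" "\<tau> ! (n - i) = \<tau> ! (n - i')"
      moreover have "n - i < length \<tau>" "n - i' < length \<tau>" using len kk_pos calculation by auto
      ultimately have "n - i = n - i'" using dist by (simp add: nth_eq_iff_index_eq)
      then show "i = i'" using \<open>i \<in> {kk+1..n}\<close> \<open>i' \<in> {kk+1..n}\<close> by auto
    qed
    have img: "{x\<in>{1..n}. 0 < lvt x} = (\<lambda>i. \<tau> ! (n - i)) ` {kk+1..n}"
    proof (rule set_eqI, rule iffI)
      fix x assume x: "x \<in> {x\<in>{1..n}. 0 < lvt x}"
      then obtain p where p: "p < n" "x = \<tau> ! p" using mem_C by blast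
      then have "p < n - kk" using lv_pos_iff x by auto
      then have "n - p \<in> {kk+1..n}" "n - (n - p) = p" using p by auto
      then show "x \<in> (\<lambda>i. \<tau> ! (n - i)) ` {kk+1..n}" using p by (metis image_eqI)
    next
      fix x assume "x \<in> (\<lambda>i. \<tau> ! (n - i)) ` {kk+1..n}"
      then obtain i where i: "i \<in> {kk+1..n}" "x = \<tau> ! (n - i)" by auto
      then have p: "n - i < n" "n - i < n - kk" using kk_pos by auto
      then have "0 < lvt x" using lv_pos_iff i by simp
      moreover have "x \<in> {1..n}" using i(2) p st len nth_mem by blast
      ultimately show "x \<in> {x\<in>{1..n}. 0 < lvt x}" by simp
    qed
    show ?thesis unfolding img by (rule prod.reindex[OF inj, unfolded comp_def, symmetric])
  qed
  finally show ?thesis .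
qed

end


lemma pairs_card: "distinct L \<Longrightarrow> pairs lv L = card {(a,b). a \<in> set L \<and> b \<in> set L \<and> idx L a < idx L b \<and> Pr lv a b}"
proof (induction L)
  case Nil
  then show ?case by simp
next
  case (Cons x xs)
  have xn: "x \<notin> set xs" and dx: "distinct xs" using Cons.prems by auto
  let ?S = "{(a,b). a \<in> set (x#xs) \<and> b \<in> set (x#xs) \<and> idx (x#xs) a < idx (x#xs) b \<and> Pr lv a b}"
  let ?S1 = "Pair x ` {b\<in>set xs. Pr lv x b}"
  let ?S2 = "{(a,b). a \<in> set xs \<and> b \<in> set xs \<and> idx xs a < idx xs b \<and> Pr lv a b}"
  have ix: "\<And>y. y \<in> set xs \<Longrightarrow> idx (x#xs) y = Suc (idx xs y)" using xn by auto
  have e: "?S = ?S1 \<union> ?S2"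
  proof (rule set_eqI)
    fix p show "p \<in> ?S \<longleftrightarrow> p \<in> ?S1 \<union> ?S2"
    proof (cases p)
      case (Pair a b)
      show ?thesis
      proof (cases "a = x")
        case True
        then show ?thesis using Pair xn ix by auto
      next
        case False
        then show ?thesis using Pair xn ix by auto
      qed
    qed
  qed
  have dj: "?S1 \<inter> ?S2 = {}" using xn by auto
  have "card ?S = card ?S1 + card ?S2" unfolding e by (rule card_Un_disjoint) (use xn in \<open>auto intro: finite_subset[of _ "set xs \<times> set xs"]\<close>)
  moreover have "card ?S1 = length (filter (Pr lv x) xs)"
    using len_filter_card[OF dx, of "Pr lv x"] by (simp add: card_image inj_on_def)
  ultimately show ?case using Cons.IH[OF dx] by simp
qed

context shape_ctx
begin

lemma idx_inj: "a \<in> {1..n} \<Longrightarrow> b \<in> {1..n} \<Longrightarrow> idx L a = idx L b \<Longrightarrow> a = b"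
  using nth_idx sL by metis

lemma dinv_f: "dinv n f = pairs lv L + card {c\<in>{1..n}. lv c < g}"
proof -
  let ?C = "{1..n}"
  have S1: "{(a, b). a \<in> ?C \<and> b \<in> ?C \<and> diag n f a = diag n f b \<and> f a < f b \<and> a < b}
          = {(a,b). a \<in> ?C \<and> b \<in> ?C \<and> idx L a < idx L b \<and> lv a = lv b \<and> a < b}"
  proof (rule set_eqI)
    fix p show "p \<in> {(a, b). a \<in> ?C \<and> b \<in> ?C \<and> diag n f a = diag n f b \<and> f a < f b \<and> a < b}
          \<longleftrightarrow> p \<in> {(a,b). a \<in> ?C \<and> b \<in> ?C \<and> idx L a < idx L b \<and> lv a = lv b \<and> a < b}"
    proof (cases p)
      case (Pair a b)
      show ?thesis
      proof (cases "a \<in> ?C \<and> b \<in> ?C")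
        case True
        then show ?thesis using Pair diag_f f_lt_iff[of a b] by auto
      qed (use Pair in auto)
    qed
  qed
  have S2: "{(a, b). a \<in> ?C \<and> b \<in> ?C \<and> b < a \<and> diag n f a = diag n f b + 1 \<and> f a < f b}
          = {(a,b). a \<in> ?C \<and> b \<in> ?C \<and> idx L a < idx L b \<and> lv a = lv b + 1 \<and> b < a}"
  proof (rule set_eqI)
    fix p show "p \<in> {(a, b). a \<in> ?C \<and> b \<in> ?C \<and> b < a \<and> diag n f a = diag n f b + 1 \<and> f a < f b}
          \<longleftrightarrow> p \<in> {(a,b). a \<in> ?C \<and> b \<in> ?C \<and> idx L a < idx L b \<and> lv a = lv b + 1 \<and> b < a}"
    proof (cases p)
      case (Pair a b)
      show ?thesis
      proof (cases "a \<in> ?C \<and> b \<in> ?C \<and> b < a \<and> lv a = lv b + 1")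
        case True
        have ne: "idx L a \<noteq> idx L b"
        proof
          assume "idx L a = idx L b"
          then have "a = b" using idx_inj True by blast
          then show False using True by simp
        qed
        have "int (f a) - int (f b) = int (idx L a) - int (idx L b) - 1" using f_lt_iff[of a b] True by simp
        then have "f a < f b \<longleftrightarrow> idx L a < idx L b" using ne by auto
        then show ?thesis using Pair True diag_f by auto
      next
        case False
        then show ?thesis using Pair diag_f by auto
      qed
    qed
  qed
  have S3: "{c \<in> ?C. diag n f c < 0} = {c\<in>?C. lv c < g}" using diag_f by auto
  have P: "{(a,b). a \<in> set L \<and> b \<in> set L \<and> idx L a < idx L b \<and> Pr lv a b}
      = {(a,b). a \<in> ?C \<and> b \<in> ?C \<and> idx L a < idx L b \<and> lv a = lv b \<and> a < b}
        \<union> {(a,b). a \<in> ?C \<and> b \<in> ?C \<and> idx L a < idx L b \<and> lv a = lv b + 1 \<and> b < a}"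
    using sL by (auto simp: Pr_def)
  have "card ({(a,b). a \<in> ?C \<and> b \<in> ?C \<and> idx L a < idx L b \<and> lv a = lv b \<and> a < b}
        \<union> {(a,b). a \<in> ?C \<and> b \<in> ?C \<and> idx L a < idx L b \<and> lv a = lv b + 1 \<and> b < a})
      = card {(a,b). a \<in> ?C \<and> b \<in> ?C \<and> idx L a < idx L b \<and> lv a = lv b \<and> a < b}
        + card {(a,b). a \<in> ?C \<and> b \<in> ?C \<and> idx L a < idx L b \<and> lv a = lv b + 1 \<and> b < a}"
    by (rule card_Un_disjoint) (auto intro: finite_subset[of _ "?C \<times> ?C"])
  then have "pairs lv L = card {(a,b). a \<in> ?C \<and> b \<in> ?C \<and> idx L a < idx L b \<and> lv a = lv b \<and> a < b}
        + card {(a,b). a \<in> ?C \<and> b \<in> ?C \<and> idx L a < idx L b \<and> lv a = lv b + 1 \<and> b < a}"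
    using pairs_card[OF dL, of lv] P by simp
  then show ?thesis unfolding dinv_def S1 S2 S3 by simp
qed

lemma dev_f:
  assumes "\<And>c. c \<in> {1..n} \<Longrightarrow> 0 \<le> lv c" "\<exists>c\<in>{1..n}. lv c = 0"
  shows "deviation n f = g"
proof -
  have e: "(\<lambda>c. - diag n f c) ` {1..n} = (\<lambda>c. g - lv c) ` {1..n}" using diag_f by auto
  have "Max ((\<lambda>c. g - lv c) ` {1..n}) = g"
  proof (rule Max_eqI)
    show "finite ((\<lambda>c. g - lv c) ` {1..n})" by simp
    show "\<And>y. y \<in> (\<lambda>c. g - lv c) ` {1..n} \<Longrightarrow> y \<le> g" using assms(1) by auto
    show "g \<in> (\<lambda>c. g - lv c) ` {1..n}" using assms(2) by force
  qed
  then show ?thesis unfolding deviation_def e .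
qed

lemma area_f:
  assumes "\<And>c. c \<in> {1..n} \<Longrightarrow> 0 \<le> lv c" "\<exists>c\<in>{1..n}. lv c = 0"
  shows "area n f = nat (\<Sum>c\<in>{1..n}. lv c)"
proof -
  have "(\<Sum>c\<in>{1..n}. diag n f c + deviation n f) = (\<Sum>c\<in>{1..n}. lv c)"
    using dev_f[OF assms] by (intro sum.cong[OF refl]) (simp add: diag_f)
  then show ?thesis unfolding area_def by simp
qed

end


lemma key_inv:
  fixes a b fa fb n :: nat
  assumes "a \<le> n" "b \<le> n" "fa * (n+1) + a < fb * (n+1) + b"
  shows "fa < fb \<or> (fa = fb \<and> a < b)"
proof (rule ccontr)
  assume "\<not> (fa < fb \<or> (fa = fb \<and> a < b))"
  then have "fb < fa \<or> (fb = fa \<and> b \<le> a)" by auto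
  then show False
  proof
    assume "fb < fa"
    then have "fb * (n+1) + b < fa * (n+1) + a" using key_lt[of b n a fb fa] assms by simp
    then show False using assms(3) by simp
  qed (use assms in auto)
qed

lemma run_struct:
  fixes D :: "nat \<Rightarrow> int"
  assumes srt: "sorted_wrt (drel D) \<tau>" and sL: "set L = set \<tau>" and dL: "distinct L"
    and vL: "valid D L" and hd: "D (hd L) \<le> 0" and lst: "0 \<le> D (last L)"
    and p: "Suc p < length \<tau>" and dt: "distinct \<tau>"
  shows "D (\<tau> ! p) = D (\<tau> ! Suc p) + (if \<tau> ! Suc p < \<tau> ! p then 1 else 0)"
proof -
  let ?a = "\<tau> ! p" and ?b = "\<tau> ! Suc p"
  have dr: "drel D (\<tau> ! i) (\<tau> ! j)" if "i < j" "j < length \<tau>" for i j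
    using sorted_wrt_nth_less[OF srt that] .
  have ab: "D ?b \<le> D ?a" "D ?a = D ?b \<Longrightarrow> ?a < ?b" using dr[of p "Suc p"] p by (auto simp: drel_def)
  show ?thesis
  proof (cases "D ?a = D ?b")
    case True
    then show ?thesis using ab by simp
  next
    case False
    then have lt: "D ?b < D ?a" using ab by simp
    have lenL: "length L = length \<tau>" using sL dL dt by (metis distinct_card)
    have geA: "D ?a \<le> D (\<tau> ! r)" if "r \<le> p" for r
      using dr[of r p] that p by (cases "r = p") (auto simp: drel_def)
    have leB: "D (\<tau> ! r) \<le> D ?b" if "Suc p \<le> r" "r < length \<tau>" for r
      using dr[of "Suc p" r] that by (cases "r = Suc p") (auto simp: drel_def)
    have gap: "D c \<le> D ?b \<or> D ?a \<le> D c" if "c \<in> set L" for c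
    proof -
      have "c \<in> set \<tau>" using that sL by simp
      then obtain r where r: "r < length \<tau>" "c = \<tau> ! r" by (auto simp: in_set_conv_nth)
      show ?thesis using geA[of r] leB[of r] r by (cases "r \<le> p") auto
    qed
    have cross: "\<exists>i. Suc i < length L \<and> D (L ! i) \<le> D ?b \<and> D ?a \<le> D (L ! Suc i)"
    proof (rule ccontr)
      assume nc: "\<not> ?thesis"
      have prp: "D (L ! Suc i) \<le> D ?b" if "Suc i < length L" "D (L ! i) \<le> D ?b" for i
        using nc that gap[of "L ! Suc i"] nth_mem[OF that(1)] by force
      have low: "D (L ! i) \<le> D ?b" if "j \<le> i" "i < length L" "D (L ! j) \<le> D ?b" for i j
        using that
      proof (induction i)
        case 0 then show ?case by simp
      next
        case (Suc i)
        then show ?case using prp[of i] by (cases "j = Suc i") auto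
      qed
      have neL: "L \<noteq> []" using p lenL by auto
      have "?a \<in> set L" "?b \<in> set L" using sL p by auto
      then obtain ja jb where ja: "ja < length L" "L ! ja = ?a" and jb: "jb < length L" "L ! jb = ?b"
        by (auto simp: in_set_conv_nth)
      have "\<not> D (L ! 0) \<le> D ?b" using low[of 0 ja] ja lt by auto
      then have h: "D ?a \<le> D (hd L)" using gap[of "L ! 0"] neL by (auto simp: hd_conv_nth)
      have "D (L ! (length L - 1)) \<le> D ?b" using low[of jb "length L - 1"] jb by simp
      then have "D (last L) \<le> D ?b" using neL by (simp add: last_conv_nth)
      then show False using h hd lst lt by simp
    qed
    then obtain i where i: "Suc i < length L" "D (L ! i) \<le> D ?b" "D ?a \<le> D (L ! Suc i)" by blast
    have ok: "okp D (L ! i) (L ! Suc i)" using successively_nth[OF vL[unfolded valid_def] i(1)] .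
    then have e1: "D ?a = D ?b + 1" and e2: "D (L ! i) = D ?b" and e3: "D (L ! Suc i) = D ?a"
      using i lt by (auto simp: okp_def)
    have li: "L ! i < L ! Suc i" using ok e1 e2 e3 by (simp add: okp_def)
    have b_le: "?b \<le> L ! i"
    proof -
      have "L ! i \<in> set \<tau>" using sL i(1) by (metis Suc_lessD nth_mem)
      then obtain r where r: "r < length \<tau>" "L ! i = \<tau> ! r" by (auto simp: in_set_conv_nth)
      have "\<not> r \<le> p" using geA[of r] r e2 lt by auto
      then have "Suc p \<le> r" by simp
      then show ?thesis using dr[of "Suc p" r] r e2 by (cases "r = Suc p") (auto simp: drel_def)
    qed
    have a_ge: "L ! Suc i \<le> ?a"
    proof -
      have "L ! Suc i \<in> set \<tau>" using sL i(1) by (metis nth_mem)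
      then obtain r where r: "r < length \<tau>" "L ! Suc i = \<tau> ! r" by (auto simp: in_set_conv_nth)
      have "\<not> Suc p \<le> r" using leB[of r] r e3 lt by auto
      then have "r \<le> p" by simp
      then show ?thesis using dr[of r p] r e3 p by (cases "r = p") (auto simp: drel_def)
    qed
    have "?b < ?a" using b_le li a_ge by simp
    then show ?thesis using e1 by simp
  qed
qed


lemma mod_key: "a \<le> n \<Longrightarrow> (x * (n+1) + a) mod (n+1) = (a::nat)"
proof -
  assume "a \<le> n"
  then have "a < n + 1" by simp
  have "(x*(n+1) + a) mod (n+1) = (a + x*(n+1)) mod (n+1)" by (simp only: add.commute)
  also have "\<dots> = a mod (n+1)" by (rule mod_mult_self1)
  also have "\<dots> = a" using \<open>a < n+1\<close> by (rule mod_less)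
  finally show ?thesis .
qed

context tau_ctx
begin

lemma ri_le: "ri p \<le> p"
proof -
  have "ri p = (\<Sum>i<p. dlt i)" by (rule ri_sum)
  also have "\<dots> \<le> (\<Sum>i<p. 1)" by (rule sum_mono) (simp add: dlt_def)
  finally show ?thesis by simp
qed

lemma R1_le: "int R1 \<le> int n - 1"
  using ri_le[of "n-1"] n1 unfolding R1_def by simp

lemma surj_f:
  assumes fP: "f \<in> Pref n" and dw: "diagword n f = \<tau>"
  shows "\<exists>g L. L \<in> Sh lvt {1..n} \<and> lvt (hd L) \<le> g \<and> g \<le> lvt (last L) \<and> Psi n lvt g L = f"
proof -
  let ?C = "{1..n}"
  define D where "D = diag n f"
  have fC: "\<And>c. c \<in> ?C \<Longrightarrow> f c \<in> ?C" using fP by (auto simp: Pref_def PiE_def Pi_def)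
  have fU: "\<And>c. c \<notin> ?C \<Longrightarrow> f c = undefined" using fP by (auto simp: Pref_def PiE_def extensional_def)
  define \<kappa> where "\<kappa> c = f c * (n+1) + c" for c
  define L where "L = sort_key \<kappa> (sorted_list_of_set ?C)"
  have dL: "distinct L" unfolding L_def by simp
  have sL: "set L = ?C" unfolding L_def by simp
  have lenL: "length L = n" using distinct_card[OF dL] sL by simp
  have injk: "inj_on \<kappa> ?C"
  proof (rule inj_onI)
    fix a b assume a: "a \<in> ?C" and b: "b \<in> ?C" and e: "\<kappa> a = \<kappa> b"
    have "\<kappa> a mod (n+1) = a" "\<kappa> b mod (n+1) = b" using a b mod_key by (auto simp: \<kappa>_def)
    then show "a = b" using e by simp
  qed
  have so: "sorted_wrt (<) (map \<kappa> L)"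
  proof -
    have "sorted (map \<kappa> L)" unfolding L_def by (rule sorted_sort_key)
    moreover have "distinct (map \<kappa> L)" using dL injk sL by (simp add: distinct_map)
    ultimately show ?thesis by (simp add: strict_sorted_iff)
  qed
  have row: "row n f c = idx L c" if "c \<in> ?C" for c
    using row_key[OF that, of f] rank_idx[OF dL sL so that] by (simp add: \<kappa>_def)
  have Dc: "D c = int (idx L c) - (int (f c) - 1)" if "c \<in> ?C" for c
    using row[OF that] by (simp add: D_def diag_def)
  have vD: "valid D L"
    unfolding valid_def successively_conv_nth
  proof (intro allI impI)
    fix i assume i: "Suc i < length L"
    let ?a = "L ! i" and ?b = "L ! Suc i"
    have ab: "?a \<in> ?C" "?b \<in> ?C" using i sL nth_mem[of i L] nth_mem[of "Suc i" L] by auto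
    have "\<kappa> ?a < \<kappa> ?b" using sorted_wrt_nth_less[OF so, of i "Suc i"] i by simp
    then have k: "f ?a < f ?b \<or> (f ?a = f ?b \<and> ?a < ?b)" using key_inv[of ?a n ?b "f ?a" "f ?b"] ab by (simp add: \<kappa>_def)
    have ia: "idx L ?a = i" "idx L ?b = Suc i" using idx_nth[OF dL] i by auto
    show "okp D ?a ?b" using k Dc[OF ab(1)] Dc[OF ab(2)] ia by (auto simp: okp_def)
  qed
  have neL: "L \<noteq> []" using lenL n1 by auto
  have hdD: "D (hd L) \<le> 0"
  proof -
    have "hd L \<in> ?C" using neL sL hd_in_set by blast
    moreover have "idx L (hd L) = 0" using idx_nth[OF dL, of 0] neL by (simp add: hd_conv_nth)
    ultimately show ?thesis using Dc fC by force
  qed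
  have lastD: "0 \<le> D (last L)"
  proof -
    have "last L \<in> ?C" using neL sL last_in_set by blast
    moreover have "idx L (last L) = n - 1" using idx_nth[OF dL, of "n-1"] neL lenL n1 by (simp add: last_conv_nth)
    ultimately show ?thesis using Dc fC n1 by force
  qed
  have Drng: "- int n \<le> D c \<and> D c \<le> int n" if "c \<in> ?C" for c
  proof -
    have "idx L c < n" using idx_lt[of c L] that sL lenL by simp
    then show ?thesis using Dc[OF that] fC[OF that] by auto
  qed
  define \<kappa>2 where "\<kappa>2 c = nat (int n - D c) * (n+1) + c" for c
  define \<tau>1 where "\<tau>1 = sort_key \<kappa>2 (sorted_list_of_set ?C)"
  have inj2: "inj_on \<kappa>2 ?C"
  proof (rule inj_onI)
    fix a b assume a: "a \<in> ?C" and b: "b \<in> ?C" and e: "\<kappa>2 a = \<kappa>2 b"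
    have "\<kappa>2 a mod (n+1) = a" "\<kappa>2 b mod (n+1) = b" using a b mod_key by (auto simp: \<kappa>2_def)
    then show "a = b" using e by simp
  qed
  have so2: "sorted_wrt (<) (map \<kappa>2 \<tau>1)"
  proof -
    have "sorted (map \<kappa>2 \<tau>1)" unfolding \<tau>1_def by (rule sorted_sort_key)
    moreover have "distinct (map \<kappa>2 \<tau>1)" using inj2 by (simp add: distinct_map \<tau>1_def)
    ultimately show ?thesis by (simp add: strict_sorted_iff)
  qed
  have st1: "set \<tau>1 = ?C" unfolding \<tau>1_def by simp
  have dr1: "sorted_wrt (drel D) \<tau>1"
  proof -
    have "sorted_wrt (\<lambda>x y. \<kappa>2 x < \<kappa>2 y) \<tau>1" using so2 by (simp add: sorted_wrt_map)
    then show ?thesis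
    proof (rule sorted_wrt_mono_rel[rotated])
      fix x y assume x: "x \<in> set \<tau>1" and y: "y \<in> set \<tau>1" and k: "\<kappa>2 x < \<kappa>2 y"
      have xy: "x \<in> ?C" "y \<in> ?C" using x y st1 by auto
      have "nat (int n - D x) < nat (int n - D y) \<or> (nat (int n - D x) = nat (int n - D y) \<and> x < y)"
        using key_inv[of x n y "nat (int n - D x)" "nat (int n - D y)"] k xy by (simp add: \<kappa>2_def)
      moreover have "0 \<le> int n - D x" "0 \<le> int n - D y" using Drng xy by auto
      ultimately have "D y < D x \<or> (D x = D y \<and> x < y)" by linarith
      then show "drel D x y" by (auto simp: drel_def)
    qed
  qed
  have "diagword n f = \<tau>1" by (rule diagword_char[OF dr1[unfolded D_def] st1]) (use Drng in \<open>simp add: D_def\<close>)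
  then have t1: "\<tau> = \<tau>1" using dw by simp
  have drt: "sorted_wrt (drel D) \<tau>" using dr1 t1 by simp
  have rec: "D (\<tau> ! p) = D (\<tau> ! Suc p) + (if \<tau> ! Suc p < \<tau> ! p then 1 else 0)" if "Suc p < n" for p
    by (rule run_struct[OF drt _ dL vD hdD lastD]) (use sL st len that dist in auto)
  have Dlv: "D (\<tau> ! p) = D (\<tau> ! (n - 1)) + lvt (\<tau> ! p)" if "p < n" for p
  proof -
    have "\<forall>d. d < n \<longrightarrow> D (\<tau> ! (n - 1 - d)) = D (\<tau> ! (n - 1)) + lvt (\<tau> ! (n - 1 - d))"
    proof
      fix d show "d < n \<longrightarrow> D (\<tau> ! (n - 1 - d)) = D (\<tau> ! (n - 1)) + lvt (\<tau> ! (n - 1 - d))"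
      proof (induction d)
        case 0
        then show ?case using lv_last0 by simp
      next
        case (Suc d)
        show ?case
        proof
          assume d: "Suc d < n"
          let ?p = "n - 1 - Suc d"
          have sp: "Suc ?p = n - 1 - d" using d by simp
          have "D (\<tau> ! ?p) = D (\<tau> ! Suc ?p) + (if \<tau> ! Suc ?p < \<tau> ! ?p then 1 else 0)" using rec[of ?p] d by simp
          also have "D (\<tau> ! Suc ?p) = D (\<tau> ! (n - 1)) + lvt (\<tau> ! Suc ?p)" using Suc d sp by simp
          also have "lvt (\<tau> ! ?p) = lvt (\<tau> ! Suc ?p) + int (dlt ?p)" using lv_step[of ?p] d sp by simp
          ultimately show "D (\<tau> ! ?p) = D (\<tau> ! (n - 1)) + lvt (\<tau> ! ?p)" by (simp add: dlt_def)
        qed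
      qed
    qed
    then have A: "D (\<tau> ! (n - 1 - (n-1-p))) = D (\<tau> ! (n - 1)) + lvt (\<tau> ! (n - 1 - (n-1-p)))"
      by (rule allE[of _ "n-1-p"]) (use that in simp)
    have "n - 1 - (n - 1 - p) = p" using that by auto
    then show ?thesis using A by simp
  qed
  define g where "g = - D (\<tau> ! (n - 1))"
  have Dg: "D c = lvt c - g" if cC: "c \<in> ?C" for c
  proof -
    obtain p where p: "p < n" "c = \<tau> ! p" using mem_C[OF cC] by blast
    have "D (\<tau> ! p) = D (\<tau> ! (n - 1)) + lvt (\<tau> ! p)" by (rule Dlv[OF p(1)])
    then show ?thesis unfolding g_def p(2) by linarith
  qed
  have vl: "valid lvt L"
  proof -
    have "successively (okp D) L = successively (okp lvt) L"
    proof (rule successively_cong)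
      fix x y assume "x \<in> set L" "y \<in> set L"
      then have "D x = lvt x - g" "D y = lvt y - g" using Dg sL by auto
      then show "okp D x y = okp lvt x y" unfolding okp_def by auto
    qed simp
    then show ?thesis using vD by (simp add: valid_def)
  qed
  have Lsh: "L \<in> Sh lvt ?C" using dL sL vl by (simp add: Sh_def)
  have hC: "hd L \<in> ?C" using neL sL hd_in_set by blast
  have lC: "last L \<in> ?C" using neL sL last_in_set by blast
  have h1: "lvt (hd L) \<le> g" using hdD Dg[OF hC] by linarith
  have h2: "g \<le> lvt (last L)" using lastD Dg[OF lC] by linarith
  have "Psi n lvt g L = f"
  proof
    fix c show "Psi n lvt g L c = f c"
    proof (cases "c \<in> ?C")
      case True
      then show ?thesis using Dc[OF True] Dg[OF True] fC[OF True] by (simp add: Psi_def)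
    next
      case False
      then have "Psi n lvt g L c = undefined" unfolding Psi_def by auto
      then show ?thesis using fU[OF False] by simp
    qed
  qed
  then show ?thesis using Lsh h1 h2 by blast
qed

end


context tau_ctx
begin

lemma lvl_inst: "lvl lvt {1..n} (int R1)"
  by unfold_locales (use lv_rng lv_sur in auto)

definition TT :: "(int \<times> nat list) set" where
  "TT = Sigma {0..int R1} (\<lambda>g. {L\<in>Sh lvt {1..n}. QJ lvt g L})"

definition hh :: "int \<times> nat list \<Rightarrow> (nat \<Rightarrow> nat)" where
  "hh p = Psi n lvt (fst p) (snd p)"

lemma exists0: "\<exists>c\<in>{1..n}. lvt c = 0"
  using lv_last0 n1 len st nth_mem by (metis diff_less less_numeral_extra(1) order_less_le_trans)

lemma TT_ctx: "p \<in> TT \<Longrightarrow> shape_ctx n lvt (fst p) (snd p)"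
  unfolding TT_def by (cases p) (use n1 in \<open>auto simp: QJ_def shape_ctx_def\<close>)

lemma TT_g: "p \<in> TT \<Longrightarrow> 0 \<le> fst p \<and> fst p \<le> int R1"
  unfolding TT_def by auto

lemma hh_F: "p \<in> TT \<Longrightarrow> hh p \<in> Pref n \<and> diagword n (hh p) = \<tau>"
proof -
  assume p: "p \<in> TT"
  interpret S: shape_ctx n lvt "fst p" "snd p" by (rule TT_ctx[OF p])
  have g: "0 \<le> fst p" "fst p \<le> int R1" using TT_g[OF p] by auto
  have "diagword n (hh p) = \<tau>"
    unfolding hh_def
  proof (rule diagword_char)
    show "sorted_wrt (drel (diag n (Psi n lvt (fst p) (snd p)))) \<tau>"
      using lv_drel
    proof (rule sorted_wrt_mono_rel[rotated])
      fix x y assume "x \<in> set \<tau>" "y \<in> set \<tau>" "drel lvt x y"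
      then show "drel (diag n (Psi n lvt (fst p) (snd p))) x y"
        using S.diag_f st by (auto simp: drel_def)
    qed
    show "set \<tau> = {1..n}" by (rule st)
    fix c assume c: "c \<in> {1..n}"
    show "- int n \<le> diag n (Psi n lvt (fst p) (snd p)) c \<and> diag n (Psi n lvt (fst p) (snd p)) c \<le> int n"
      using S.diag_f[OF c] lv_rng[OF c] g R1_le by auto
  qed
  then show ?thesis using S.in_Pref by (simp add: hh_def)
qed

lemma hh_inj: "inj_on hh TT"
proof (rule inj_onI)
  fix p p' assume p: "p \<in> TT" and p': "p' \<in> TT" and e: "hh p = hh p'"
  interpret S: shape_ctx n lvt "fst p" "snd p" by (rule TT_ctx[OF p])
  interpret S': shape_ctx n lvt "fst p'" "snd p'" by (rule TT_ctx[OF p'])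
  have "\<And>c. c \<in> {1..n} \<Longrightarrow> idx (snd p) c = idx (snd p') c"
    using S.row_f S'.row_f e by (metis hh_def)
  then have L: "snd p = snd p'" using list_eq_idx[OF S.dL S'.dL S.sL S'.sL] by blast
  obtain c where c: "c \<in> {1..n}" using n1 by auto
  have "lvt c - fst p = lvt c - fst p'" using S.diag_f[OF c] S'.diag_f[OF c] e by (metis hh_def)
  then have "fst p = fst p'" by simp
  then show "p = p'" using L by (simp add: prod_eq_iff)
qed

lemma hh_img: "hh ` TT = {f\<in>Pref n. diagword n f = \<tau>}"
proof (rule set_eqI, rule iffI)
  fix f assume "f \<in> hh ` TT" then show "f \<in> {f\<in>Pref n. diagword n f = \<tau>}" using hh_F by auto
next
  fix f assume "f \<in> {f\<in>Pref n. diagword n f = \<tau>}"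
  then obtain g L where gL: "L \<in> Sh lvt {1..n}" "lvt (hd L) \<le> g" "g \<le> lvt (last L)" "Psi n lvt g L = f"
    using surj_f by blast
  have neL: "L \<noteq> []" using gL(1) n1 by (auto simp: Sh_def)
  have "hd L \<in> {1..n}" "last L \<in> {1..n}" using gL(1) neL by (auto simp: Sh_def)
  then have "0 \<le> g" "g \<le> int R1" using lv_rng gL by fastforce+
  then have "(g, L) \<in> TT" using gL by (auto simp: TT_def QJ_def)
  then show "f \<in> hh ` TT" using gL(4) by (force simp: hh_def)
qed

lemma hh_bij: "bij_betw hh TT {f\<in>Pref n. diagword n f = \<tau>}"
  using hh_inj hh_img by (simp add: bij_betw_def)

lemma finTT: "finite TT"
  unfolding TT_def by (rule finite_SigmaI) (auto intro: finite_subset[OF _ finite_Sh[of "{1..n}" lvt]])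

lemma hh_val: "p \<in> TT \<Longrightarrow> t ^ area n (hh p) * q ^ dinv n (hh p)
    = t ^ maj \<tau> * q ^ (pairs lvt (snd p) + card {c\<in>{1..n}. lvt c < fst p})"
proof -
  assume p: "p \<in> TT"
  interpret S: shape_ctx n lvt "fst p" "snd p" by (rule TT_ctx[OF p])
  have "area n (hh p) = maj \<tau>" unfolding hh_def using S.area_f[OF _ exists0] lv_rng sum_lv by simp
  moreover have "dinv n (hh p) = pairs lvt (snd p) + card {c\<in>{1..n}. lvt c < fst p}"
    unfolding hh_def by (rule S.dinv_f)
  ultimately show ?thesis by simp
qed

lemma pref_sum:
  fixes t q :: "'a::comm_ring_1"
  shows "(\<Sum>f\<in>{f\<in>Pref n. diagword n f = \<tau>}. t ^ area n f * q ^ dinv n f)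
       = t ^ maj \<tau> * (qint n q * Y0 lvt {1..n} 0 q)"
proof -
  interpret LV: lvl lvt "{1..n}" "int R1" by (rule lvl_inst)
  have "(\<Sum>f\<in>{f\<in>Pref n. diagword n f = \<tau>}. t ^ area n f * q ^ dinv n f)
      = (\<Sum>p\<in>TT. t ^ area n (hh p) * q ^ dinv n (hh p))"
    by (rule sum.reindex_bij_betw[OF hh_bij, symmetric])
  also have "\<dots> = (\<Sum>p\<in>TT. t ^ maj \<tau> * q ^ (pairs lvt (snd p) + card {c\<in>{1..n}. lvt c < fst p}))"
    by (rule sum.cong[OF refl]) (rule hh_val)
  also have "\<dots> = (\<Sum>(g,L)\<in>TT. t ^ maj \<tau> * q ^ (pairs lvt L + card {c\<in>{1..n}. lvt c < g}))"
    by (rule sum.cong) auto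
  also have "\<dots> = (\<Sum>g\<in>{0..int R1}. \<Sum>L\<in>{L\<in>Sh lvt {1..n}. QJ lvt g L}. t ^ maj \<tau> * q ^ (pairs lvt L + card {c\<in>{1..n}. lvt c < g}))"
    unfolding TT_def by (subst sum.Sigma) (auto intro: finite_subset[OF _ finite_Sh[of "{1..n}" lvt]])
  also have "\<dots> = (\<Sum>g\<in>{0..int R1}. t ^ maj \<tau> * (q ^ LV.NN g * GFJ lvt g {1..n} q))"
    unfolding LV.NN_def GFJ_def by (rule sum.cong[OF refl]) (simp add: sum_distrib_left power_add mult_ac)
  also have "\<dots> = t ^ maj \<tau> * (\<Sum>g\<in>{0..int R1}. q ^ LV.NN g * GFJ lvt g {1..n} q)"
    by (simp add: sum_distrib_left)
  also have "\<dots> = t ^ maj \<tau> * (qint n q * Y0 lvt {1..n} 0 q)"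
  proof -
    have "(\<Sum>g\<in>{0..int R1}. q ^ LV.NN g * GFJ lvt g {1..n} q) = qint (card {1..n}) q * Y0 lvt {1..n} 0 q"
      by (rule LV.sum_over_levels)
    then show ?thesis by simp
  qed
  finally show ?thesis .
qed

lemma dev_hh: "p \<in> TT \<Longrightarrow> deviation n (hh p) = fst p"
proof -
  assume p: "p \<in> TT"
  interpret S: shape_ctx n lvt "fst p" "snd p" by (rule TT_ctx[OF p])
  show ?thesis unfolding hh_def by (rule S.dev_f) (use lv_rng exists0 in auto)
qed

lemma pf_sum:
  fixes t q :: "'a::comm_ring_1"
  shows "(\<Sum>f\<in>{f\<in>PF n. diagword n f = \<tau>}. t ^ area n f * q ^ dinv n f)
       = t ^ maj \<tau> * (qint kk q * Y0 lvt {1..n} 0 q)"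
proof -
  interpret LV: lvl lvt "{1..n}" "int R1" by (rule lvl_inst)
  define T0 where "T0 = Sigma {0::int} (\<lambda>g. {L\<in>Sh lvt {1..n}. QJ lvt g L})"
  have sub: "T0 \<subseteq> TT" unfolding T0_def TT_def by auto
  have img: "hh ` T0 = {f\<in>PF n. diagword n f = \<tau>}"
  proof (rule set_eqI, rule iffI)
    fix f assume "f \<in> hh ` T0"
    then obtain p where p: "p \<in> T0" "f = hh p" by auto
    have pT: "p \<in> TT" using p sub by auto
    have "fst p = 0" using p unfolding T0_def by auto
    then show "f \<in> {f\<in>PF n. diagword n f = \<tau>}" using hh_F[OF pT] dev_hh[OF pT] p by (simp add: PF_def)
  next
    fix f assume f: "f \<in> {f\<in>PF n. diagword n f = \<tau>}"
    then have "f \<in> hh ` TT" using hh_img by (auto simp: PF_def)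
    then obtain p where p: "p \<in> TT" "f = hh p" by auto
    have "fst p = 0" using dev_hh[OF p(1)] f p by (simp add: PF_def)
    then have "p \<in> T0" using p(1) unfolding T0_def TT_def by (cases p) auto
    then show "f \<in> hh ` T0" using p by auto
  qed
  have bij: "bij_betw hh T0 {f\<in>PF n. diagword n f = \<tau>}"
    using inj_on_subset[OF hh_inj sub] img by (simp add: bij_betw_def)
  have e0: "{c\<in>{1..n}. lvt c < 0} = {}" using lv_rng by force
  have "(\<Sum>f\<in>{f\<in>PF n. diagword n f = \<tau>}. t ^ area n f * q ^ dinv n f)
      = (\<Sum>p\<in>T0. t ^ area n (hh p) * q ^ dinv n (hh p))"
    by (rule sum.reindex_bij_betw[OF bij, symmetric])
  also have "\<dots> = (\<Sum>p\<in>T0. t ^ maj \<tau> * q ^ (pairs lvt (snd p) + card {c\<in>{1..n}. lvt c < fst p}))"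
  proof (rule sum.cong[OF refl])
    fix p assume "p \<in> T0"
    then have "p \<in> TT" using sub by auto
    then show "t ^ area n (hh p) * q ^ dinv n (hh p) = t ^ maj \<tau> * q ^ (pairs lvt (snd p) + card {c\<in>{1..n}. lvt c < fst p})"
      by (rule hh_val)
  qed
  also have "\<dots> = (\<Sum>L\<in>{L\<in>Sh lvt {1..n}. QJ lvt 0 L}. t ^ maj \<tau> * q ^ pairs lvt L)"
  proof -
    have "T0 = (\<lambda>L. (0, L)) ` {L\<in>Sh lvt {1..n}. QJ lvt 0 L}" unfolding T0_def by auto
    moreover have "inj_on (\<lambda>L. (0::int, L)) {L\<in>Sh lvt {1..n}. QJ lvt 0 L}" by (auto simp: inj_on_def)
    ultimately have "(\<Sum>p\<in>T0. t ^ maj \<tau> * q ^ (pairs lvt (snd p) + card {c\<in>{1..n}. lvt c < fst p}))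
       = (\<Sum>L\<in>{L\<in>Sh lvt {1..n}. QJ lvt 0 L}. t ^ maj \<tau> * q ^ (pairs lvt (snd (0::int, L)) + card {c\<in>{1..n}. lvt c < fst (0::int, L)}))"
      by (simp add: sum.reindex)
    then show ?thesis by (simp only: fst_conv snd_conv e0 card.empty add_0_right)
  qed
  also have "\<dots> = t ^ maj \<tau> * GFJ lvt 0 {1..n} q" by (simp add: GFJ_def sum_distrib_left)
  also have "GFJ lvt 0 {1..n} q = qint (card {x\<in>{1..n}. lvt x = 0}) q * Y0 lvt {1..n} 0 q"
    by (rule LV.GFJ_Y) auto
  also have "card {x\<in>{1..n}. lvt x = 0} = kk" using kk_lvl by simp
  finally show ?thesis .
qed

lemma sched_Y: "(\<Prod>i=1..n. qint (schedule \<tau> i) q) = qint kk q * Y0 lvt {1..n} 0 (q::'a::comm_ring_1)"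
proof -
  have e0: "{c\<in>{1..n}. lvt c < 0} = {}" using lv_rng by force
  have Y: "Y0 lvt {1..n} 0 q = qfact (kk - 1) q * (\<Prod>c\<in>{x\<in>{1..n}. 0 < lvt x}. qint (wt lvt {1..n} c) q)"
    unfolding Y0_def e0 kk_lvl by simp
  have "(\<Prod>i=1..n. qint (schedule \<tau> i) q) = qfact kk q * (\<Prod>c\<in>{x\<in>{1..n}. 0 < lvt x}. qint (wt lvt {1..n} c) q)"
    by (rule sched_prod)
  also have "qfact kk q = qint kk q * qfact (kk - 1) q" by (rule qfact_pos[OF kk_pos])
  finally show ?thesis unfolding Y by (simp add: mult.assoc)
qed

end

theorem main_result:
  fixes n :: nat and \<tau> :: "nat list" and t q :: "'a::field"
  assumes "n \<ge> 1" and "length \<tau> = n" and "distinct \<tau>" and "set \<tau> = {1..n}"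
    and "qint (last_run_len \<tau>) q \<noteq> 0"
  shows "(\<Sum>f\<in>{f \<in> Pref n. diagword n f = \<tau>}. t ^ area n f * q ^ dinv n f)
           = t ^ maj \<tau> * (qint n q / qint (last_run_len \<tau>) q) * (\<Prod>i=1..n. qint (schedule \<tau> i) q)
       \<and> t ^ maj \<tau> * (qint n q / qint (last_run_len \<tau>) q) * (\<Prod>i=1..n. qint (schedule \<tau> i) q)
           = (qint n q / qint (last_run_len \<tau>) q) *
             (\<Sum>f\<in>{f \<in> PF n. diagword n f = \<tau>}. t ^ area n f * q ^ dinv n f)"
proof -
  interpret T: tau_ctx n \<tau> using assms by unfold_locales auto
  have nz: "qint (last_run_len \<tau>) q \<noteq> 0" by fact
  show ?thesis
    unfolding T.pref_sum T.pf_sum T.sched_Y using nz by (simp add: field_simps)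
qed


theorem corollary3p3:
  fixes n :: nat and \<tau> :: "nat list" and t q :: "'a::field"
  assumes "n \<ge> 1" and "length \<tau> = n" and "distinct \<tau>" and "set \<tau> = {1..n}"
    and "qint (last_run_len \<tau>) q \<noteq> 0"
  shows "(\<Sum>f\<in>{f \<in> Pref n. diagword n f = \<tau>}. t ^ area n f * q ^ dinv n f)
           = t ^ maj \<tau> * (qint n q / qint (last_run_len \<tau>) q) * (\<Prod>i=1..n. qint (schedule \<tau> i) q)
       \<and> t ^ maj \<tau> * (qint n q / qint (last_run_len \<tau>) q) * (\<Prod>i=1..n. qint (schedule \<tau> i) q)
           = (qint n q / qint (last_run_len \<tau>) q) *
             (\<Sum>f\<in>{f \<in> PF n. diagword n f = \<tau>}. t ^ area n f * q ^ dinv n f)"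
  using main_result[OF assms] .

end
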